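(* In the group \(\mathcal{G}\) described below, let \(i,j,k,l\in\{1,\dots,7\}\) be four points of the Fano plane no three of which are collinear. Then \(s_is_j=s_ks_l\).
   Context: Let \(\mathcal{G}=\langle x,y,t \mid x^7, y^2, (xy)^3, [x,y]^4, t^2, [t^{x^2},yx^{-1}], [t,y], (yt^{x^2})^5, (xyx^2t^x)^5, (xt)^8\rangle\), with \(a^g=g^{-1}ag\), \([a,b]=a^{-1}b^{-1}ab\). Let \(\mathcal{N}=\langle x,y\rangle\le\mathcal{G}\); it acts on \(\{1,\dots,14\}\) on the right via \(x\mapsto(1,2,3,4,5,6,7)(8,9,10,11,12,13,14)\), \(y\mapsto(1,12)(2,3)(4,11)(5,8)(6,13)(9,10)\). Put \(t_7=t\) and \(t_i=t^g\) for any \(g\in\mathcal{N}\) mapping \(7\) to \(i\); indices are taken modulo 14, and \(s_i=t_it_{i+7}\). The Fano plane has points \(1,\dots,7\) and lines \(\{7,1,5\},\{1,2,6\},\{2,3,7\},\{3,4,1\},\{4,5,2\},\{5,6,3\},\{6,7,4\}\). *)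

theory Defs
  imports Main
begin

datatype gen = GX | GY | GT

text \<open>A letter is (inverted?, generator); a word is a list of letters.\<close>
type_synonym word = "(bool \<times> gen) list"

definition inv_letter :: "bool \<times> gen \<Rightarrow> bool \<times> gen" where
  "inv_letter a = (\<not> fst a, snd a)"

definition winv :: "word \<Rightarrow> word" where
  "winv w = rev (map inv_letter w)"

definition wpow :: "word \<Rightarrow> nat \<Rightarrow> word" where
  "wpow w n = concat (replicate n w)"

definition wconj :: "word \<Rightarrow> word \<Rightarrow> word" where
  "wconj a g = winv g @ a @ g"

definition wcomm :: "word \<Rightarrow> word \<Rightarrow> word" where
  "wcomm a b = winv a @ winv b @ a @ b"

definition wx :: word where "wx = [(False, GX)]"
definition wy :: word where "wy = [(False, GY)]"
definition wt :: word where "wt = [(False, GT)]"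

definition relators :: "word set" where
  "relators =
    { wpow wx 7, wpow wy 2, wpow (wx @ wy) 3, wpow (wcomm wx wy) 4, wpow wt 2,
      wcomm (wconj wt (wpow wx 2)) (wy @ winv wx),
      wcomm wt wy,
      wpow (wy @ wconj wt (wpow wx 2)) 5,
      wpow (wx @ wy @ wpow wx 2 @ wconj wt wx) 5,
      wpow (wx @ wt) 8 }"

inductive G_eq :: "word \<Rightarrow> word \<Rightarrow> bool" where
  G_refl: "G_eq u u"
| G_sym: "G_eq u v \<Longrightarrow> G_eq v u"
| G_trans: "G_eq u v \<Longrightarrow> G_eq v w \<Longrightarrow> G_eq u w"
| G_cancel: "G_eq (u @ [a, inv_letter a] @ v) (u @ v)"
| G_rel: "r \<in> relators \<Longrightarrow> G_eq (u @ r @ v) (u @ v)"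

definition perm_x :: "nat \<Rightarrow> nat" where
  "perm_x p = (if p \<in> {1..6} \<or> p \<in> {8..13} then p + 1
               else if p = 7 then 1 else if p = 14 then 8 else p)"

definition perm_x_inv :: "nat \<Rightarrow> nat" where
  "perm_x_inv p = (if p \<in> {2..7} \<or> p \<in> {9..14} then p - 1
                   else if p = 1 then 7 else if p = 8 then 14 else p)"

definition perm_y :: "nat \<Rightarrow> nat" where
  "perm_y p = (if p = 1 then 12 else if p = 12 then 1
          else if p = 2 then 3 else if p = 3 then 2
          else if p = 4 then 11 else if p = 11 then 4
          else if p = 5 then 8 else if p = 8 then 5
          else if p = 6 then 13 else if p = 13 then 6
          else if p = 9 then 10 else if p = 10 then 9 else p)"

definition act_letter :: "bool \<times> gen \<Rightarrow> nat \<Rightarrow> nat" where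
  "act_letter a p = (case a of
      (False, GX) \<Rightarrow> perm_x p
    | (True, GX) \<Rightarrow> perm_x_inv p
    | (_, GY) \<Rightarrow> perm_y p
    | (_, GT) \<Rightarrow> p)"

text \<open>Right action: the image of point p under the word w, letters applied left to right.\<close>
fun act :: "word \<Rightarrow> nat \<Rightarrow> nat" where
  "act [] p = p"
| "act (a # w) p = act w (act_letter a p)"

definition in_N :: "word \<Rightarrow> bool" where
  "in_N w \<longleftrightarrow> (\<forall>a \<in> set w. snd a \<noteq> GT)"

text \<open>w is a word representing t_i, i.e. t^g for some g in N mapping 7 to i.\<close>
definition is_t :: "nat \<Rightarrow> word \<Rightarrow> bool" where
  "is_t i w \<longleftrightarrow> (\<exists>g. in_N g \<and> act g 7 = i \<and> w = wconj wt g)"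

definition fano_lines :: "nat set set" where
  "fano_lines = {{7,1,5},{1,2,6},{2,3,7},{3,4,1},{4,5,2},{5,6,3},{6,7,4}}"

definition collinear :: "nat \<Rightarrow> nat \<Rightarrow> nat \<Rightarrow> bool" where
  "collinear a b c \<longleftrightarrow> (\<exists>L \<in> fano_lines. {a, b, c} \<subseteq> L)"

end

theory Submission
  imports Defs
begin


abbreviation "lx \<equiv> (False, GX)"
abbreviation "lX \<equiv> (True, GX)"
abbreviation "ly \<equiv> (False, GY)"
abbreviation "lY \<equiv> (True, GY)"
abbreviation "lt \<equiv> (False, GT)"
abbreviation "lT \<equiv> (True, GT)"

lemma inv_inv_letter[simp]: "inv_letter (inv_letter a) = a"
  by (simp add: inv_letter_def)

lemma G_eq_app_left: "G_eq u v \<Longrightarrow> G_eq (w@u) (w@v)"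
proof (induction rule: G_eq.induct)
  case (G_refl u) then show ?case by (rule G_eq.G_refl)
next
  case (G_sym u v) then show ?case by (blast intro: G_eq.G_sym)
next
  case (G_trans u v x) then show ?case by (blast intro: G_eq.G_trans)
next
  case (G_cancel u a v) then show ?case using G_eq.G_cancel[of "w@u" a v] by simp
next
  case (G_rel r u v) then show ?case using G_eq.G_rel[of r "w@u" v] by simp
qed

lemma G_eq_app_right: "G_eq u v \<Longrightarrow> G_eq (u@w) (v@w)"
proof (induction rule: G_eq.induct)
  case (G_refl u) then show ?case by (rule G_eq.G_refl)
next
  case (G_sym u v) then show ?case by (blast intro: G_eq.G_sym)
next
  case (G_trans u v x) then show ?case by (blast intro: G_eq.G_trans)
next
  case (G_cancel u a v) then show ?case using G_eq.G_cancel[of u a "v@w"] by simp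
next
  case (G_rel r u v) then show ?case using G_eq.G_rel[of r u "v@w"] by simp
qed

lemma G_eq_app: "G_eq u v \<Longrightarrow> G_eq u' v' \<Longrightarrow> G_eq (u@u') (v@v')"
  by (meson G_eq.G_trans G_eq_app_left G_eq_app_right)

lemma winv_append[simp]: "winv (u@v) = winv v @ winv u"
  by (simp add: winv_def)
lemma winv_Nil[simp]: "winv [] = []" by (simp add: winv_def)
lemma winv_Cons[simp]: "winv (a#u) = winv u @ [inv_letter a]" by (simp add: winv_def)
lemma winv_winv[simp]: "winv (winv u) = u" by (simp add: winv_def rev_map comp_def)

lemma G_eq_inv_cancel: "G_eq (winv w @ w) []"
proof (induction w)
  case Nil then show ?case by (simp add: G_eq.G_refl)
next
  case (Cons a w)
  have "G_eq (winv w @ [inv_letter a, inv_letter (inv_letter a)] @ w) (winv w @ w)"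
    by (rule G_eq.G_cancel)
  then show ?case using Cons G_eq.G_trans by fastforce
qed

lemma G_eq_cancel_inv: "G_eq (w @ winv w) []"
  using G_eq_inv_cancel[of "winv w"] by simp

lemma G_eq_rel0: "r \<in> relators \<Longrightarrow> G_eq r []"
  using G_eq.G_rel[of r "[]" "[]"] by simp

lemma G_eq_winv: "G_eq u [] \<Longrightarrow> G_eq (winv u) []"
proof -
  assume "G_eq u []"
  then have "G_eq (winv u @ u) (winv u @ [])" by (rule G_eq_app_left)
  then show ?thesis using G_eq_inv_cancel by (metis G_eq.G_sym G_eq.G_trans append_Nil2)
qed

lemma G_eq_conj0: "G_eq u [] \<Longrightarrow> G_eq (winv g @ u @ g) []"
proof -
  assume "G_eq u []"
  then have "G_eq (winv g @ (u @ g)) (winv g @ ([] @ g))" by (intro G_eq_app_left G_eq_app_right)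
  then show ?thesis using G_eq_inv_cancel G_eq.G_trans by fastforce
qed

section \<open>Free reduction\<close>

fun red_acc :: "word \<Rightarrow> word \<Rightarrow> word" where
  "red_acc acc [] = rev acc"
| "red_acc [] (a#w) = red_acc [a] w"
| "red_acc (b#acc) (a#w) = (if b = inv_letter a then red_acc acc w else red_acc (a#b#acc) w)"

lemma red_acc_sound: "G_eq (rev acc @ w) (red_acc acc w)"
proof (induction acc w rule: red_acc.induct)
  case (1 acc) then show ?case by (simp add: G_eq.G_refl)
next
  case (2 a w) then show ?case by simp
next
  case (3 b acc a w)
  show ?case
  proof (cases "b = inv_letter a")
    case True
    have "G_eq (rev acc @ [inv_letter a, inv_letter (inv_letter a)] @ w) (rev acc @ w)"
      by (rule G_eq.G_cancel)
    then show ?thesis using 3 True by (auto intro: G_eq.G_trans)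
  next
    case False then show ?thesis using 3 by simp
  qed
qed

definition red :: "word \<Rightarrow> word" where "red w = red_acc [] w"

lemma red_sound: "G_eq w (red w)"
  using red_acc_sound[of "[]" w] by (simp add: red_def)

definition piece :: "word list \<Rightarrow> word \<times> nat \<times> bool \<Rightarrow> word" where
  "piece K c = (case c of (g,i,s) \<Rightarrow> winv g @ (if s then K!i else winv (K!i)) @ g)"

fun chk :: "word list \<Rightarrow> (word \<times> (word \<times> nat \<times> bool) list) list \<Rightarrow> bool" where
  "chk K [] = True"
| "chk K ((w,c)#rest) = ((\<forall>x\<in>set c. fst (snd x) < length K) \<and>
      red w = red (concat (map (piece K) c)) \<and> chk (K@[w]) rest)"

lemma G_eq_concat0: "\<forall>u\<in>set us. G_eq u [] \<Longrightarrow> G_eq (concat us) []"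
proof (induction us)
  case Nil then show ?case by (simp add: G_eq.G_refl)
next
  case (Cons u us)
  then have "G_eq (u @ concat us) ([] @ [])" by (intro G_eq_app) auto
  then show ?case by simp
qed

lemma chk_sound: "chk K L \<Longrightarrow> \<forall>k\<in>set K. G_eq k [] \<Longrightarrow> \<forall>x\<in>set L. G_eq (fst x) []"
proof (induction K L rule: chk.induct)
  case (1 K) then show ?case by simp
next
  case (2 K w c rest)
  have pc: "\<forall>u\<in>set (map (piece K) c). G_eq u []"
  proof
    fix u assume "u \<in> set (map (piece K) c)"
    then obtain g i s where gis: "(g,i,s) \<in> set c" "u = piece K (g,i,s)" by auto
    then have "i < length K" using 2(2) by auto
    then have k: "G_eq (K!i) []" using 2(3) by auto
    show "G_eq u []" using gis k by (auto simp: piece_def intro!: G_eq_conj0 G_eq_winv)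
  qed
  have r: "red w = red (concat (map (piece K) c))" using 2(2) by simp
  have "G_eq w (red (concat (map (piece K) c)))" using red_sound[of w] r by simp
  moreover have "G_eq (red (concat (map (piece K) c))) (concat (map (piece K) c))"
    by (rule G_eq.G_sym[OF red_sound])
  ultimately have "G_eq w []" using G_eq_concat0[OF pc] by (blast intro: G_eq.G_trans)
  moreover have "\<forall>x\<in>set rest. G_eq (fst x) []" using 2 \<open>G_eq w []\<close> by auto
  ultimately show ?case by simp
qed

definition relL :: "word list" where
  "relL = [wpow wx 7, wpow wy 2, wpow (wx @ wy) 3, wpow (wcomm wx wy) 4, wpow wt 2,
      wcomm (wconj wt (wpow wx 2)) (wy @ winv wx),
      wcomm wt wy,
      wpow (wy @ wconj wt (wpow wx 2)) 5,
      wpow (wx @ wy @ wpow wx 2 @ wconj wt wx) 5,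
      wpow (wx @ wt) 8]"

lemma relL_ok: "\<forall>k\<in>set relL. G_eq k []"
  unfolding relL_def by (auto intro!: G_eq_rel0 simp: relators_def)

lemma chk_last: "chk relL L \<Longrightarrow> L \<noteq> [] \<Longrightarrow> G_eq (fst (last L)) []"
  using chk_sound[OF _ relL_ok] by simp


definition dec :: "char \<Rightarrow> bool \<times> gen" where
  "dec c = (if c = CHR ''x'' then lx else if c = CHR ''X'' then lX
     else if c = CHR ''y'' then ly else if c = CHR ''Y'' then lY
     else if c = CHR ''t'' then lt else lT)"

definition decw :: "string \<Rightarrow> word" where "decw s = map dec s"

definition chkS :: "(string \<times> (string \<times> nat \<times> bool) list) list \<Rightarrow> bool" where
  "chkS L = chk relL (map (\<lambda>(w,c). (decw w, map (\<lambda>(g,i,s). (decw g, i, s)) c)) L)"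

lemma chkS_last: "chkS L \<Longrightarrow> L \<noteq> [] \<Longrightarrow> G_eq (decw (fst (last L))) []"
proof -
  assume a: "chkS L" "L \<noteq> []"
  let ?M = "map (\<lambda>(w,c). (decw w, map (\<lambda>(g,i,s). (decw g, i, s)) c)) L"
  have "G_eq (fst (last ?M)) []" using chk_last[of ?M] a by (simp add: chkS_def)
  moreover have "fst (last ?M) = decw (fst (last L))" using a(2) by (simp add: last_map split: prod.splits)
  ultimately show ?thesis by simp
qed




lemma G_eq_equivp: "equivp G_eq"
  by (rule equivpI) (auto simp: reflp_def symp_def transp_def intro: G_eq.intros)

quotient_type gr = word / G_eq
  by (rule G_eq_equivp)

lemma G_eq_winv_cong: "G_eq u v \<Longrightarrow> G_eq (winv u) (winv v)"
proof -
  assume a: "G_eq u v"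
  have h1: "G_eq (winv u @ v @ winv v) (winv u @ u @ winv v)"
    by (rule G_eq_app_left, rule G_eq_app_right, rule G_eq.G_sym, rule a)
  have h2: "G_eq (winv u @ v @ winv v) (winv u)"
    using G_eq_app_left[OF G_eq_cancel_inv[of v], of "winv u"] by simp
  have h3: "G_eq (winv u @ u @ winv v) (winv v)"
    using G_eq_app_right[OF G_eq_inv_cancel[of u], of "winv v"] by simp
  have "G_eq (winv u) (winv u @ u @ winv v)"
    by (rule G_eq.G_trans[OF G_eq.G_sym[OF h2] h1])
  then show ?thesis by (rule G_eq.G_trans[OF _ h3])
qed

instantiation gr :: group_add
begin
lift_definition zero_gr :: gr is "[]" .
lift_definition plus_gr :: "gr \<Rightarrow> gr \<Rightarrow> gr" is "(@)" by (rule G_eq_app)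
lift_definition uminus_gr :: "gr \<Rightarrow> gr" is winv by (rule G_eq_winv_cong)
lift_definition minus_gr :: "gr \<Rightarrow> gr \<Rightarrow> gr" is "\<lambda>u v. u @ winv v"
  by (intro G_eq_app G_eq_winv_cong)
instance
proof
  fix a b c :: gr
  show "a + b + c = a + (b + c)" by transfer (simp add: G_eq.G_refl)
  show "0 + a = a" by transfer (simp add: G_eq.G_refl)
  show "a + 0 = a" by transfer (simp add: G_eq.G_refl)
  show "- a + a = 0" by transfer (rule G_eq_inv_cancel)
  show "a + - b = a - b" by transfer (simp add: G_eq.G_refl)
qed
end

declare add_uminus_conv_diff [simp del]
declare One_nat_def [simp del]

definition cl :: "word \<Rightarrow> gr" where "cl = abs_gr"

lemma cl_eq_iff: "cl u = cl v \<longleftrightarrow> G_eq u v"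
  by (simp add: cl_def gr.abs_eq_iff)

lemma cl_append: "cl (u @ v) = cl u + cl v"
  unfolding cl_def by (metis plus_gr.abs_eq)
lemma cl_Nil: "cl [] = 0"
  unfolding cl_def by (metis zero_gr.abs_eq)
lemma cl_winv: "cl (winv u) = - cl u"
  unfolding cl_def by (metis uminus_gr.abs_eq)
lemma cl_Cons: "cl (a # w) = cl [a] + cl w"
  using cl_append[of "[a]" w] by simp

lemma cl_zero_iff: "cl u = 0 \<longleftrightarrow> G_eq u []"
  using cl_eq_iff[of u "[]"] by (simp add: cl_Nil)

definition Xg :: gr where "Xg = cl [lx]"
definition Yg :: gr where "Yg = cl [ly]"
definition Tg :: gr where "Tg = cl [lt]"

lemma cl_lX: "cl [lX] = - Xg"
  using cl_winv[of "[lx]"] by (simp add: Xg_def inv_letter_def)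
lemma cl_lY: "cl [lY] = - Yg"
  using cl_winv[of "[ly]"] by (simp add: Yg_def inv_letter_def)
lemma cl_lT: "cl [lT] = - Tg"
  using cl_winv[of "[lt]"] by (simp add: Tg_def inv_letter_def)

lemma cl_letter: "cl [a] = (case a of (False,GX) \<Rightarrow> Xg | (True,GX) \<Rightarrow> - Xg
   | (False,GY) \<Rightarrow> Yg | (True,GY) \<Rightarrow> - Yg | (False,GT) \<Rightarrow> Tg | (True,GT) \<Rightarrow> - Tg)"
  by (cases a; cases "fst a"; cases "snd a") (auto simp: Xg_def Yg_def Tg_def cl_lX cl_lY cl_lT)

lemma cl_Cons2: "cl (a # b # w) = cl [a] + cl (b # w)"
  using cl_append[of "[a]" "b # w"] by simp

lemmas cl_simps = cl_Nil cl_Cons2 cl_letter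

lemma cl_rel: "r \<in> relators \<Longrightarrow> cl r = 0"
  by (simp add: cl_zero_iff G_eq_rel0)




lemma red_nil: "red w = [] \<Longrightarrow> G_eq w []"
  using red_sound[of w] by simp

lemma geq_cl: "G_eq (u @ winv v) [] \<Longrightarrow> cl u = cl v"
proof -
  assume "G_eq (u @ winv v) []"
  then have "cl u + - cl v = 0" by (simp add: cl_zero_iff[symmetric] cl_append cl_winv)
  then show ?thesis by (simp add: add_eq_0_iff2)
qed

lemma chk_nth: "chkS L \<Longrightarrow> i < length L \<Longrightarrow> G_eq (decw (fst (L ! i))) []"
proof -
  assume a: "chkS L" "i < length L"
  let ?M = "map (\<lambda>(w,c). (decw w, map (\<lambda>(g,i,s). (decw g, i, s)) c)) L"
  have "\<forall>x\<in>set ?M. G_eq (fst x) []" using chk_sound[OF _ relL_ok, of ?M] a(1) by (simp add: chkS_def)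
  moreover have "?M ! i \<in> set ?M" using a(2) by simp
  moreover have "fst (?M ! i) = decw (fst (L ! i))" using a(2) by (simp split: prod.splits)
  ultimately show ?thesis by metis
qed

definition Rw :: "nat \<Rightarrow> word" where
  "Rw p = ([[], [lx], [lx, lx], [lx, lx, lx], [lX, lX, lX], [lX, lX], [lX], [], [lX, lX, ly], [lX, lX, ly, lx], [lx, ly, lX, lX], [lx, ly, lX], [lx, ly], [lX, ly], [lX, ly, lx]] ! p)"

definition Cw :: word where "Cw = [lx, lx, ly, lX, lX, lX]"

definition blockw :: "bool \<Rightarrow> word" where "blockw b = (if b then [ly] else Cw)"

definition Ssyms :: "nat \<Rightarrow> bool list" where
  "Ssyms s = ([[], [False], [True], [False, False], [False, True], [True, False], [False, False, True], [False, True, False], [True, False, False], [True, False, True], [False, False, True, False], [False, True, False, False]] ! s)"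

definition Sw :: "nat \<Rightarrow> word" where "Sw s = concat (map blockw (Ssyms s))"

definition Hx :: "nat \<Rightarrow> bool list" where
  "Hx p = ([[], [], [], [], [], [], [], [], [], [False, True, False, False], [], [], [True], [], [False, False, True, False]] ! p)"

definition Hy :: "nat \<Rightarrow> bool list" where
  "Hy p = ([[], [], [False], [False, False], [False, False], [], [], [True], [], [False, False], [False], [False], [], [], [False, False, True, False]] ! p)"

definition mt :: "nat \<Rightarrow> bool \<Rightarrow> nat" where
  "mt s b = (if b then [2, 4, 0, 6, 1, 9, 3, 8, 7, 5, 11, 10] ! s else [1, 3, 5, 0, 7, 8, 10, 11, 2, 6, 9, 4] ! s)"

definition NL :: "(string \<times> (string \<times> nat \<times> bool) list) list" where
  "NL = [(''YY'',[('''',1,False)]),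
    (''yy'',[('''',1,True)]),
    (''xxxxxxx'',[('''',0,True)]),
    (''xyxyxy'',[('''',2,True)]),
    (''XyxyXyxyXyxyXyxy'',[(''xYXYxYXYxYXYx'',10,False),(''xYXYxYXYx'',10,False),(''xYXYx'',10,False),(''x'',10,False),('''',3,True)]),
    (''yxyXyxyXyxyXyxyX'',[(''X'',14,True)]),
    (''xxxxxxx'',[(''x'',12,True)]),
    (''yxyxyx'',[(''x'',13,True)]),
    (''xxxxxxx'',[(''x'',16,True)]),
    (''xxxxxxx'',[(''x'',18,True)]),
    (''XXXXXXX'',[(''x'',19,False)]),
    (''xyXyxyXyxyXyxyXY'',[('''',11,False),(''Y'',15,True)]),
    (''yXyxyXyxyXyxyXYx'',[(''x'',21,True)]),
    (''xyxyxY'',[('''',11,False),(''Y'',17,True)]),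
    (''yxyxYx'',[(''x'',23,True)]),
    (''XXyXXXyXXXyXXYxY'',[(''xxYxxxYxx'',24,False),(''xxYxx'',24,False),(''x'',24,False),('''',11,False),(''Y'',22,True)]),
    (''XyXXXyXXXyXXYxYX'',[(''X'',25,True)]),
    (''yXXXyXXXyXXYxYXX'',[(''X'',26,True)]),
    (''yXyXYX'',[(''Y'',24,False),('''',11,True)]),
    (''XXXyXXXyXXYxYXXY'',[('''',11,False),(''Y'',27,True)]),
    (''XXyXXXyXXYxYXXYX'',[(''X'',29,True)]),
    (''xxyxxyXyxxYxxxYx'',[(''X'',30,False)]),
    (''yXyxXXYX'',[('''',25,False),(''xxYxxxYxx'',24,False),(''xxYxx'',24,False),(''x'',24,False),('''',13,False),(''XYX'',15,True)]),
    (''xxxyXXXyXXXYXXXYx'',[(''XXXX'',31,False),('''',16,True),(''XXYx'',32,True)]),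
    (''XXyxxxyxxxYxxxYXX'',[(''x'',33,False)]),
    (''XyXXyXYXXY'',[('''',24,False),('''',23,False),(''YX'',30,False),(''xxYxxYX'',24,False),(''xYX'',24,False),(''xYXYxYXYxYX'',17,False),('''',21,True)]),
    (''yXXyXYXXYX'',[(''X'',35,True)]),
    (''yXyXYX'',[('''',23,False),(''XYX'',11,True)]),
    (''xyxxyxxXYxxY'',[(''XYX'',32,False),('''',23,True)]),
    (''XyXXXyXXXyxxxyxXXYXXX'',[(''YxxxYxxxYx'',20,False),(''xxYxxxYx'',24,False),(''xxYx'',24,False),('''',24,False),(''xYXYxYXYxYXY'',11,False),(''YxYXYxYXYxYXY'',38,False),('''',15,True)]),
    (''yXXXyXXXyxxxyxXXYxxx'',[(''X'',39,True),('''',19,True)]),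
    (''XXXyXXXyxxxyxXXYxxxY'',[('''',11,False),(''Y'',40,True)]),
    (''XXyXXXyxxxyxXXYxxxYX'',[(''X'',41,True)]),
    (''XyXXXyxxxyxXXYxxxYXX'',[(''X'',42,True)]),
    (''yXXXyxxxyxXXYxxxYXXX'',[(''X'',43,True)]),
    (''XyxxyXXXyxxXYXXXYxxY'',[('''',24,False),('''',23,False),(''YXXYXYX'',20,False),(''xYXXYXYX'',11,False),(''YX'',30,False),(''xxYxxYX'',24,False),(''xYX'',24,False),(''YxYXYxYXYxYX'',19,False),(''XYxYXYxYXYxYX'',44,False),('''',21,True)]),
    (''xyxxyxYxxY'',[(''XYX'',37,False),('''',23,True)]),
    (''xxyxxyXXyxxxyXYXXXY'',[(''X'',36,False),(''YxxxYxxYX'',20,False),(''xxYxxYX'',24,False),(''xYX'',24,False),(''xYXYxYXYxYX'',11,False),(''YxYXYxYXYxYX'',46,False),('''',21,True)]),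
    (''xyxxyXXyxxxyXYXXXYx'',[(''x'',47,True)]),
    (''yxxyXXyxxxyXYXXXYxx'',[(''x'',48,True)]),
    (''xxyXXyxxxyXYXXXYxxY'',[('''',11,False),(''Y'',49,True)]),
    (''xxxxxxx'',[('''',12,True)]),
    (''xxxyXXxxxYXXxxxYXX'',[(''XYXXX'',10,True),(''XYXYXXX'',10,True),(''XX'',13,True)]),
    (''XXXyxYXxxxYXXxxxYXX'',[(''XYxxx'',10,True),(''XXYXYxxx'',10,True),(''XYXXYXYxxx'',10,True),(''XYXYxxx'',23,True),(''xxx'',17,True),('''',20,True)]),
    (''XXyyxx'',[(''xx'',11,True)]),
    (''XXyxxxxYXxxxYXXxxxYXXYxxxYXX'',[(''XXXXYxx'',10,True),(''XXYXXXXYxx'',10,True),(''XYXXYXXXXYxx'',10,True),(''xxYXYXXYXXXXYxx'',10,True),(''XXXYxxYXYXXYXXXXYxx'',10,True),(''Yxx'',19,True),(''XYxxxYxx'',23,True),(''xxxYxx'',24,True),(''Yxx'',20,True),(''YXXXYxx'',20,True),('''',34,True),(''xxxYXX'',11,True),(''XX'',11,True)]),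
    (''XXyxyxxYXxxxYXXxxxYXX'',[(''XXYXYxx'',10,True),(''XXYXXYXYxx'',10,True),(''XYXXYXXYXYxx'',10,True),(''XYXXYXYxx'',23,True),(''XYXYxx'',23,True),(''xx'',17,True),('''',20,True)]),
    (''xyXXyXYxxxxxYXX'',[(''xYxxYX'',10,True),(''XXXXXYxYxxYX'',10,True),(''YxYxxYX'',18,True),(''xxYX'',28,True),(''X'',28,True),(''XX'',11,True)]),
    (''xyXyxxxxxxYXX'',[(''XXXXXXYxYX'',10,True),(''YxYX'',16,True),(''X'',28,True),(''XX'',11,True)]),
    (''xyxYxY'',[(''XYX'',10,True),(''XYXYX'',10,True),('''',13,True)]),
    (''xyyX'',[(''X'',11,True)]),
    (''Xyyx'',[(''x'',11,True)]),
    (''XyxxYxxxxxYXXYxxxYXXxxxYXX'',[(''XXYx'',10,True),(''XXXXXYXXYx'',10,True),(''xxYXXXXXYXXYx'',10,True),(''XXXYxxYXXXXXYXXYx'',10,True),(''XYXXXYxxYXXXXXYXXYx'',10,True),(''YXXYx'',18,True),(''XXYxxYxxYXXYx'',23,True),(''XXYx'',36,True),(''XYx'',31,True),(''x'',11,True),(''xxxx'',11,True),('''',20,True)]),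
    (''XyxyXYxxxxYXXYxxxYXXxxxYXX'',[(''xYXYx'',10,True),(''XXXXYxYXYx'',10,True),(''xxYXXXXYxYXYx'',10,True),(''XXXYxxYXXXXYxYXYx'',10,True),(''XYXXXYxxYXXXXYxYXYx'',10,True),(''YxYXYx'',19,True),(''XXYxxYxxxYxYXYx'',23,True),(''x'',24,True),(''Yxx'',30,True),(''xYXXYXYxx'',11,True),(''XYXYxx'',23,True),(''xx'',17,True),('''',20,True)]),
    (''yy'',[('''',11,True)]),
    (''xxyXXXxxyXXXxxyXXX'',[(''XX'',28,True),(''XXX'',11,True)]),
    (''xxyXXXyyxxxYXX'',[(''XXXYYxxxYXX'',10,True),(''xxxYXX'',11,True),(''XX'',11,True)]),
    (''xxyXXXxxyXXXyyxxxYXXxxxYXX'',[(''XXXYYxxxYxYXX'',10,True),(''XYXXXYYxxxYxYXX'',10,True),(''xxxYxYXX'',11,True),(''xYXX'',11,True),(''XX'',11,True)]),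
    (''xxyXXXyxxyXXXyxxxYXXxxxYXXY'',[(''XXXYxxxYXXYxxxYXX'',10,True),(''XYXXXYxxxYXXYxxxYXX'',10,True),(''xxYXYXXXYxxxYXXYxxxYXX'',10,True),(''XXYxxxYXXYxxxYXX'',23,True),(''xxYXX'',45,True),(''XXYxxYxxYXX'',23,True),(''YXXYxxYxxYXX'',20,True),(''XX'',36,True),(''X'',31,True),(''xxxY'',11,True),('''',11,True)]),
    (''yxxyXXXxxyXXXyxxxYXXYxxxYXX'',[(''XXXYxxxYxYXXY'',10,True),(''xxYXXXYxxxYxYXXY'',10,True),(''XXXYxxYXXXYxxxYxYXXY'',10,True),(''XXY'',28,True),(''XY'',50,True),('''',24,True),(''XXXYxxxYx'',32,True),(''YxxxYx'',19,True),(''YxxxYxxxYx'',19,True),(''xYx'',25,True),(''x'',28,True),('''',11,True)]),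
    (''yxxyXXXxxyXXXxxyXXXY'',[(''xxxYxYxYXXY'',10,True),(''XXY'',28,True),(''XXXY'',11,True),('''',11,True)]),
    (''yxxyXXXyyxxxYXXY'',[(''XXXYYxxxYXXY'',10,True),(''xxYXXXYYxxxYXXY'',10,True),(''xxxYXXY'',11,True),(''XXY'',11,True),('''',11,True)]),
    (''yxxyXXXyxxyXXXYxxxYXXxxxYXX'',[(''xxxYXXYxxxYXXY'',10,True),(''XXXYxxxYXXYxxxYXXY'',10,True),(''XYXXXYxxxYXXYxxxYXXY'',10,True),(''XXYxxxYXXYxxxYXXY'',23,True),(''xxYXXY'',45,True),(''XXYxxYxxYXXY'',23,True),(''YXXYxxYxxYXXY'',20,True),(''XXY'',36,True),(''XY'',31,True),('''',11,True),(''xxx'',11,True)]),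
    (''xxyXXXxxyXXXyxxyXXXyxxxYXXxxxYXXYxxxYXX'',[(''XXXYxxxYXXYxxxYxYXX'',10,True),(''XYXXXYxxxYXXYxxxYxYXX'',10,True),(''xxYXYXXXYxxxYXXYxxxYxYXX'',10,True),(''XXXYxxYXYXXXYxxxYXXYxxxYxYXX'',10,True),(''XXYxxxYXXYxxxYxYXX'',23,True),(''XX'',28,True),(''xYXXX'',45,True),(''XXYxxYxYXXX'',23,True),(''YXXYxxYxYXXX'',20,True),(''XXX'',28,True),('''',19,True),(''xxx'',32,True),('''',34,True),(''xxxYXX'',11,True),(''XX'',11,True)]),
    (''xxyXXXxxyXXXyxxyXXXxxyXXXYxxxYXXY'',[(''xxxYxYXXYxxxYxYXX'',10,True),(''XXXYxxxYxYXXYxxxYxYXX'',10,True),(''xxYXXXYxxxYxYXXYxxxYxYXX'',10,True),(''XX'',28,True),(''XXYxxYXXX'',28,True),(''X'',50,True),(''XXXYxxYX'',32,True),(''YxxYX'',19,True),(''YxxxYxxYX'',19,True),(''YX'',25,True),(''X'',11,True),('''',11,True)]),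
    (''xxyXXXyxxyXXXxxyXXXyxxxYXXYxxxYXXxxxYXX'',[(''XXXYxxxYxYXXYxxxYXX'',10,True),(''xxYXXXYxxxYxYXXYxxxYXX'',10,True),(''XXXYxxYXXXYxxxYxYXXYxxxYXX'',10,True),(''XYXXXYxxYXXXYxxxYxYXXYxxxYXX'',10,True),(''XXYxxYXXXYxxxYxYXXYxxxYXX'',23,True),(''XXYxxxYXX'',28,True),(''XYxxxYXX'',50,True),(''xxxYXX'',24,True),(''YXX'',20,True),(''XXXYxxxYXXXYXX'',32,True),(''YxxxYXXXYXX'',19,True),(''YXX'',33,True),(''XXXYxYXX'',11,True),(''YxYXX'',16,True),(''XX'',28,True),(''XXX'',11,True)]),
    (''xxyXXXyxxyXXXxxyXXXxxyXXXYxxxYXX'',[(''xxxYxYxYXXYxxxYXX'',10,True),(''XXXYxxxYxYxYXXYxxxYXX'',10,True),(''XXYxxxYXX'',28,True),(''XXXYxxxYXX'',11,True),(''xxxYXX'',11,True),(''XX'',11,True)])]"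

lemma NL_ok: "chkS NL" unfolding NL_def by code_simp
lemma HLx_1: "cl (Rw 1 @ [lx]) = cl (concat (map blockw (Hx 1)) @ Rw 2)"
proof -
  have "G_eq ([lx, lx] @ winv [lx, lx]) []" by (rule red_nil) code_simp
  then have "cl [lx, lx] = cl [lx, lx]" by (rule geq_cl)
  then show ?thesis by (simp add: Rw_def Hx_def blockw_def Cw_def)
qed

lemma HLx_2: "cl (Rw 2 @ [lx]) = cl (concat (map blockw (Hx 2)) @ Rw 3)"
proof -
  have "G_eq ([lx, lx, lx] @ winv [lx, lx, lx]) []" by (rule red_nil) code_simp
  then have "cl [lx, lx, lx] = cl [lx, lx, lx]" by (rule geq_cl)
  then show ?thesis by (simp add: Rw_def Hx_def blockw_def Cw_def)
qed

lemma HLx_3: "cl (Rw 3 @ [lx]) = cl (concat (map blockw (Hx 3)) @ Rw 4)"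
proof -
  have "G_eq ([lx, lx, lx, lx] @ winv [lX, lX, lX]) []" using chk_nth[OF NL_ok, of 41] by (simp add: NL_def decw_def dec_def inv_letter_def)
  then have "cl [lx, lx, lx, lx] = cl [lX, lX, lX]" by (rule geq_cl)
  then show ?thesis by (simp add: Rw_def Hx_def blockw_def Cw_def)
qed

lemma HLx_4: "cl (Rw 4 @ [lx]) = cl (concat (map blockw (Hx 4)) @ Rw 5)"
proof -
  have "G_eq ([lX, lX, lX, lx] @ winv [lX, lX]) []" by (rule red_nil) code_simp
  then have "cl [lX, lX, lX, lx] = cl [lX, lX]" by (rule geq_cl)
  then show ?thesis by (simp add: Rw_def Hx_def blockw_def Cw_def)
qed

lemma HLx_5: "cl (Rw 5 @ [lx]) = cl (concat (map blockw (Hx 5)) @ Rw 6)"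
proof -
  have "G_eq ([lX, lX, lx] @ winv [lX]) []" by (rule red_nil) code_simp
  then have "cl [lX, lX, lx] = cl [lX]" by (rule geq_cl)
  then show ?thesis by (simp add: Rw_def Hx_def blockw_def Cw_def)
qed

lemma HLx_6: "cl (Rw 6 @ [lx]) = cl (concat (map blockw (Hx 6)) @ Rw 7)"
proof -
  have "G_eq ([lX, lx] @ winv []) []" by (rule red_nil) code_simp
  then have "cl [lX, lx] = cl []" by (rule geq_cl)
  then show ?thesis by (simp add: Rw_def Hx_def blockw_def Cw_def)
qed

lemma HLx_7: "cl (Rw 7 @ [lx]) = cl (concat (map blockw (Hx 7)) @ Rw 1)"
proof -
  have "G_eq ([lx] @ winv [lx]) []" by (rule red_nil) code_simp
  then have "cl [lx] = cl [lx]" by (rule geq_cl)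
  then show ?thesis by (simp add: Rw_def Hx_def blockw_def Cw_def)
qed

lemma HLx_8: "cl (Rw 8 @ [lx]) = cl (concat (map blockw (Hx 8)) @ Rw 9)"
proof -
  have "G_eq ([lX, lX, ly, lx] @ winv [lX, lX, ly, lx]) []" by (rule red_nil) code_simp
  then have "cl [lX, lX, ly, lx] = cl [lX, lX, ly, lx]" by (rule geq_cl)
  then show ?thesis by (simp add: Rw_def Hx_def blockw_def Cw_def)
qed

lemma HLx_9: "cl (Rw 9 @ [lx]) = cl (concat (map blockw (Hx 9)) @ Rw 10)"
proof -
  have "G_eq ([lX, lX, ly, lx, lx] @ winv [lx, lx, ly, lX, lX, lX, ly, lx, lx, ly, lX, lX, lX, lx, lx, ly, lX, lX, lX, lx, ly, lX, lX]) []" using chk_nth[OF NL_ok, of 45] by (simp add: NL_def decw_def dec_def inv_letter_def)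
  then have "cl [lX, lX, ly, lx, lx] = cl [lx, lx, ly, lX, lX, lX, ly, lx, lx, ly, lX, lX, lX, lx, lx, ly, lX, lX, lX, lx, ly, lX, lX]" by (rule geq_cl)
  then show ?thesis by (simp add: Rw_def Hx_def blockw_def Cw_def)
qed

lemma HLx_10: "cl (Rw 10 @ [lx]) = cl (concat (map blockw (Hx 10)) @ Rw 11)"
proof -
  have "G_eq ([lx, ly, lX, lX, lx] @ winv [lx, ly, lX]) []" by (rule red_nil) code_simp
  then have "cl [lx, ly, lX, lX, lx] = cl [lx, ly, lX]" by (rule geq_cl)
  then show ?thesis by (simp add: Rw_def Hx_def blockw_def Cw_def)
qed

lemma HLx_11: "cl (Rw 11 @ [lx]) = cl (concat (map blockw (Hx 11)) @ Rw 12)"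
proof -
  have "G_eq ([lx, ly, lX, lx] @ winv [lx, ly]) []" by (rule red_nil) code_simp
  then have "cl [lx, ly, lX, lx] = cl [lx, ly]" by (rule geq_cl)
  then show ?thesis by (simp add: Rw_def Hx_def blockw_def Cw_def)
qed

lemma HLx_12: "cl (Rw 12 @ [lx]) = cl (concat (map blockw (Hx 12)) @ Rw 13)"
proof -
  have "G_eq ([lx, ly, lx] @ winv [ly, lX, ly]) []" using chk_nth[OF NL_ok, of 49] by (simp add: NL_def decw_def dec_def inv_letter_def)
  then have "cl [lx, ly, lx] = cl [ly, lX, ly]" by (rule geq_cl)
  then show ?thesis by (simp add: Rw_def Hx_def blockw_def Cw_def)
qed

lemma HLx_13: "cl (Rw 13 @ [lx]) = cl (concat (map blockw (Hx 13)) @ Rw 14)"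
proof -
  have "G_eq ([lX, ly, lx] @ winv [lX, ly, lx]) []" by (rule red_nil) code_simp
  then have "cl [lX, ly, lx] = cl [lX, ly, lx]" by (rule geq_cl)
  then show ?thesis by (simp add: Rw_def Hx_def blockw_def Cw_def)
qed

lemma HLx_14: "cl (Rw 14 @ [lx]) = cl (concat (map blockw (Hx 14)) @ Rw 8)"
proof -
  have "G_eq ([lX, ly, lx, lx] @ winv [lx, lx, ly, lX, lX, lX, lx, lx, ly, lX, lX, lX, ly, lx, lx, ly, lX, lX, lX, lX, lX, ly]) []" using chk_nth[OF NL_ok, of 52] by (simp add: NL_def decw_def dec_def inv_letter_def)
  then have "cl [lX, ly, lx, lx] = cl [lx, lx, ly, lX, lX, lX, lx, lx, ly, lX, lX, lX, ly, lx, lx, ly, lX, lX, lX, lX, lX, ly]" by (rule geq_cl)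
  then show ?thesis by (simp add: Rw_def Hx_def blockw_def Cw_def)
qed

lemma HLy_1: "cl (Rw 1 @ [ly]) = cl (concat (map blockw (Hy 1)) @ Rw 12)"
proof -
  have "G_eq ([lx, ly] @ winv [lx, ly]) []" by (rule red_nil) code_simp
  then have "cl [lx, ly] = cl [lx, ly]" by (rule geq_cl)
  then show ?thesis by (simp add: Rw_def Hy_def blockw_def Cw_def)
qed

lemma HLy_2: "cl (Rw 2 @ [ly]) = cl (concat (map blockw (Hy 2)) @ Rw 3)"
proof -
  have "G_eq ([lx, lx, ly] @ winv [lx, lx, ly, lX, lX, lX, lx, lx, lx]) []" by (rule red_nil) code_simp
  then have "cl [lx, lx, ly] = cl [lx, lx, ly, lX, lX, lX, lx, lx, lx]" by (rule geq_cl)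
  then show ?thesis by (simp add: Rw_def Hy_def blockw_def Cw_def)
qed

lemma HLy_3: "cl (Rw 3 @ [ly]) = cl (concat (map blockw (Hy 3)) @ Rw 2)"
proof -
  have "G_eq ([lx, lx, lx, ly] @ winv [lx, lx, ly, lX, lX, lX, lx, lx, ly, lX, lX, lX, lx, lx]) []" using chk_nth[OF NL_ok, of 42] by (simp add: NL_def decw_def dec_def inv_letter_def)
  then have "cl [lx, lx, lx, ly] = cl [lx, lx, ly, lX, lX, lX, lx, lx, ly, lX, lX, lX, lx, lx]" by (rule geq_cl)
  then show ?thesis by (simp add: Rw_def Hy_def blockw_def Cw_def)
qed

lemma HLy_4: "cl (Rw 4 @ [ly]) = cl (concat (map blockw (Hy 4)) @ Rw 11)"
proof -
  have "G_eq ([lX, lX, lX, ly] @ winv [lx, lx, ly, lX, lX, lX, lx, lx, ly, lX, lX, lX, lx, ly, lX]) []" using chk_nth[OF NL_ok, of 43] by (simp add: NL_def decw_def dec_def inv_letter_def)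
  then have "cl [lX, lX, lX, ly] = cl [lx, lx, ly, lX, lX, lX, lx, lx, ly, lX, lX, lX, lx, ly, lX]" by (rule geq_cl)
  then show ?thesis by (simp add: Rw_def Hy_def blockw_def Cw_def)
qed

lemma HLy_5: "cl (Rw 5 @ [ly]) = cl (concat (map blockw (Hy 5)) @ Rw 8)"
proof -
  have "G_eq ([lX, lX, ly] @ winv [lX, lX, ly]) []" by (rule red_nil) code_simp
  then have "cl [lX, lX, ly] = cl [lX, lX, ly]" by (rule geq_cl)
  then show ?thesis by (simp add: Rw_def Hy_def blockw_def Cw_def)
qed

lemma HLy_6: "cl (Rw 6 @ [ly]) = cl (concat (map blockw (Hy 6)) @ Rw 13)"
proof -
  have "G_eq ([lX, ly] @ winv [lX, ly]) []" by (rule red_nil) code_simp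
  then have "cl [lX, ly] = cl [lX, ly]" by (rule geq_cl)
  then show ?thesis by (simp add: Rw_def Hy_def blockw_def Cw_def)
qed

lemma HLy_7: "cl (Rw 7 @ [ly]) = cl (concat (map blockw (Hy 7)) @ Rw 7)"
proof -
  have "G_eq ([ly] @ winv [ly]) []" by (rule red_nil) code_simp
  then have "cl [ly] = cl [ly]" by (rule geq_cl)
  then show ?thesis by (simp add: Rw_def Hy_def blockw_def Cw_def)
qed

lemma HLy_8: "cl (Rw 8 @ [ly]) = cl (concat (map blockw (Hy 8)) @ Rw 5)"
proof -
  have "G_eq ([lX, lX, ly, ly] @ winv [lX, lX]) []" using chk_nth[OF NL_ok, of 44] by (simp add: NL_def decw_def dec_def inv_letter_def)
  then have "cl [lX, lX, ly, ly] = cl [lX, lX]" by (rule geq_cl)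
  then show ?thesis by (simp add: Rw_def Hy_def blockw_def Cw_def)
qed

lemma HLy_9: "cl (Rw 9 @ [ly]) = cl (concat (map blockw (Hy 9)) @ Rw 10)"
proof -
  have "G_eq ([lX, lX, ly, lx, ly] @ winv [lx, lx, ly, lX, lX, lX, lx, lx, ly, lX, lX, lX, lx, ly, lX, lX]) []" using chk_nth[OF NL_ok, of 46] by (simp add: NL_def decw_def dec_def inv_letter_def)
  then have "cl [lX, lX, ly, lx, ly] = cl [lx, lx, ly, lX, lX, lX, lx, lx, ly, lX, lX, lX, lx, ly, lX, lX]" by (rule geq_cl)
  then show ?thesis by (simp add: Rw_def Hy_def blockw_def Cw_def)
qed

lemma HLy_10: "cl (Rw 10 @ [ly]) = cl (concat (map blockw (Hy 10)) @ Rw 9)"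
proof -
  have "G_eq ([lx, ly, lX, lX, ly] @ winv [lx, lx, ly, lX, lX, lX, lX, lX, ly, lx]) []" using chk_nth[OF NL_ok, of 47] by (simp add: NL_def decw_def dec_def inv_letter_def)
  then have "cl [lx, ly, lX, lX, ly] = cl [lx, lx, ly, lX, lX, lX, lX, lX, ly, lx]" by (rule geq_cl)
  then show ?thesis by (simp add: Rw_def Hy_def blockw_def Cw_def)
qed

lemma HLy_11: "cl (Rw 11 @ [ly]) = cl (concat (map blockw (Hy 11)) @ Rw 4)"
proof -
  have "G_eq ([lx, ly, lX, ly] @ winv [lx, lx, ly, lX, lX, lX, lX, lX, lX]) []" using chk_nth[OF NL_ok, of 48] by (simp add: NL_def decw_def dec_def inv_letter_def)
  then have "cl [lx, ly, lX, ly] = cl [lx, lx, ly, lX, lX, lX, lX, lX, lX]" by (rule geq_cl)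
  then show ?thesis by (simp add: Rw_def Hy_def blockw_def Cw_def)
qed

lemma HLy_12: "cl (Rw 12 @ [ly]) = cl (concat (map blockw (Hy 12)) @ Rw 1)"
proof -
  have "G_eq ([lx, ly, ly] @ winv [lx]) []" using chk_nth[OF NL_ok, of 50] by (simp add: NL_def decw_def dec_def inv_letter_def)
  then have "cl [lx, ly, ly] = cl [lx]" by (rule geq_cl)
  then show ?thesis by (simp add: Rw_def Hy_def blockw_def Cw_def)
qed

lemma HLy_13: "cl (Rw 13 @ [ly]) = cl (concat (map blockw (Hy 13)) @ Rw 6)"
proof -
  have "G_eq ([lX, ly, ly] @ winv [lX]) []" using chk_nth[OF NL_ok, of 51] by (simp add: NL_def decw_def dec_def inv_letter_def)
  then have "cl [lX, ly, ly] = cl [lX]" by (rule geq_cl)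
  then show ?thesis by (simp add: Rw_def Hy_def blockw_def Cw_def)
qed

lemma HLy_14: "cl (Rw 14 @ [ly]) = cl (concat (map blockw (Hy 14)) @ Rw 14)"
proof -
  have "G_eq ([lX, ly, lx, ly] @ winv [lx, lx, ly, lX, lX, lX, lx, lx, ly, lX, lX, lX, ly, lx, lx, ly, lX, lX, lX, lX, ly, lx]) []" using chk_nth[OF NL_ok, of 53] by (simp add: NL_def decw_def dec_def inv_letter_def)
  then have "cl [lX, ly, lx, ly] = cl [lx, lx, ly, lX, lX, lX, lx, lx, ly, lX, lX, lX, ly, lx, lx, ly, lX, lX, lX, lX, ly, lx]" by (rule geq_cl)
  then show ?thesis by (simp add: Rw_def Hy_def blockw_def Cw_def)
qed

lemma ST_0_y: "cl (Sw 0 @ blockw True) = cl (Sw (mt 0 True))"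
proof -
  have "G_eq ([ly] @ winv [ly]) []" by (rule red_nil) code_simp
  then have "cl [ly] = cl [ly]" by (rule geq_cl)
  then show ?thesis by (simp add: Sw_def Ssyms_def mt_def blockw_def Cw_def)
qed

lemma ST_0_C: "cl (Sw 0 @ blockw False) = cl (Sw (mt 0 False))"
proof -
  have "G_eq ([lx, lx, ly, lX, lX, lX] @ winv [lx, lx, ly, lX, lX, lX]) []" by (rule red_nil) code_simp
  then have "cl [lx, lx, ly, lX, lX, lX] = cl [lx, lx, ly, lX, lX, lX]" by (rule geq_cl)
  then show ?thesis by (simp add: Sw_def Ssyms_def mt_def blockw_def Cw_def)
qed

lemma ST_1_y: "cl (Sw 1 @ blockw True) = cl (Sw (mt 1 True))"
proof -
  have "G_eq ([lx, lx, ly, lX, lX, lX, ly] @ winv [lx, lx, ly, lX, lX, lX, ly]) []" by (rule red_nil) code_simp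
  then have "cl [lx, lx, ly, lX, lX, lX, ly] = cl [lx, lx, ly, lX, lX, lX, ly]" by (rule geq_cl)
  then show ?thesis by (simp add: Sw_def Ssyms_def mt_def blockw_def Cw_def)
qed

lemma ST_1_C: "cl (Sw 1 @ blockw False) = cl (Sw (mt 1 False))"
proof -
  have "G_eq ([lx, lx, ly, lX, lX, lX, lx, lx, ly, lX, lX, lX] @ winv [lx, lx, ly, lX, lX, lX, lx, lx, ly, lX, lX, lX]) []" by (rule red_nil) code_simp
  then have "cl [lx, lx, ly, lX, lX, lX, lx, lx, ly, lX, lX, lX] = cl [lx, lx, ly, lX, lX, lX, lx, lx, ly, lX, lX, lX]" by (rule geq_cl)
  then show ?thesis by (simp add: Sw_def Ssyms_def mt_def blockw_def Cw_def)
qed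

lemma ST_2_y: "cl (Sw 2 @ blockw True) = cl (Sw (mt 2 True))"
proof -
  have "G_eq ([ly, ly] @ winv []) []" using chk_nth[OF NL_ok, of 54] by (simp add: NL_def decw_def dec_def inv_letter_def)
  then have "cl [ly, ly] = cl []" by (rule geq_cl)
  then show ?thesis by (simp add: Sw_def Ssyms_def mt_def blockw_def Cw_def)
qed

lemma ST_2_C: "cl (Sw 2 @ blockw False) = cl (Sw (mt 2 False))"
proof -
  have "G_eq ([ly, lx, lx, ly, lX, lX, lX] @ winv [ly, lx, lx, ly, lX, lX, lX]) []" by (rule red_nil) code_simp
  then have "cl [ly, lx, lx, ly, lX, lX, lX] = cl [ly, lx, lx, ly, lX, lX, lX]" by (rule geq_cl)
  then show ?thesis by (simp add: Sw_def Ssyms_def mt_def blockw_def Cw_def)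
qed

lemma ST_3_y: "cl (Sw 3 @ blockw True) = cl (Sw (mt 3 True))"
proof -
  have "G_eq ([lx, lx, ly, lX, lX, lX, lx, lx, ly, lX, lX, lX, ly] @ winv [lx, lx, ly, lX, lX, lX, lx, lx, ly, lX, lX, lX, ly]) []" by (rule red_nil) code_simp
  then have "cl [lx, lx, ly, lX, lX, lX, lx, lx, ly, lX, lX, lX, ly] = cl [lx, lx, ly, lX, lX, lX, lx, lx, ly, lX, lX, lX, ly]" by (rule geq_cl)
  then show ?thesis by (simp add: Sw_def Ssyms_def mt_def blockw_def Cw_def)
qed

lemma ST_3_C: "cl (Sw 3 @ blockw False) = cl (Sw (mt 3 False))"
proof -
  have "G_eq ([lx, lx, ly, lX, lX, lX, lx, lx, ly, lX, lX, lX, lx, lx, ly, lX, lX, lX] @ winv []) []" using chk_nth[OF NL_ok, of 55] by (simp add: NL_def decw_def dec_def inv_letter_def)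
  then have "cl [lx, lx, ly, lX, lX, lX, lx, lx, ly, lX, lX, lX, lx, lx, ly, lX, lX, lX] = cl []" by (rule geq_cl)
  then show ?thesis by (simp add: Sw_def Ssyms_def mt_def blockw_def Cw_def)
qed

lemma ST_4_y: "cl (Sw 4 @ blockw True) = cl (Sw (mt 4 True))"
proof -
  have "G_eq ([lx, lx, ly, lX, lX, lX, ly, ly] @ winv [lx, lx, ly, lX, lX, lX]) []" using chk_nth[OF NL_ok, of 56] by (simp add: NL_def decw_def dec_def inv_letter_def)
  then have "cl [lx, lx, ly, lX, lX, lX, ly, ly] = cl [lx, lx, ly, lX, lX, lX]" by (rule geq_cl)
  then show ?thesis by (simp add: Sw_def Ssyms_def mt_def blockw_def Cw_def)
qed

lemma ST_4_C: "cl (Sw 4 @ blockw False) = cl (Sw (mt 4 False))"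
proof -
  have "G_eq ([lx, lx, ly, lX, lX, lX, ly, lx, lx, ly, lX, lX, lX] @ winv [lx, lx, ly, lX, lX, lX, ly, lx, lx, ly, lX, lX, lX]) []" by (rule red_nil) code_simp
  then have "cl [lx, lx, ly, lX, lX, lX, ly, lx, lx, ly, lX, lX, lX] = cl [lx, lx, ly, lX, lX, lX, ly, lx, lx, ly, lX, lX, lX]" by (rule geq_cl)
  then show ?thesis by (simp add: Sw_def Ssyms_def mt_def blockw_def Cw_def)
qed

lemma ST_5_y: "cl (Sw 5 @ blockw True) = cl (Sw (mt 5 True))"
proof -
  have "G_eq ([ly, lx, lx, ly, lX, lX, lX, ly] @ winv [ly, lx, lx, ly, lX, lX, lX, ly]) []" by (rule red_nil) code_simp
  then have "cl [ly, lx, lx, ly, lX, lX, lX, ly] = cl [ly, lx, lx, ly, lX, lX, lX, ly]" by (rule geq_cl)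
  then show ?thesis by (simp add: Sw_def Ssyms_def mt_def blockw_def Cw_def)
qed

lemma ST_5_C: "cl (Sw 5 @ blockw False) = cl (Sw (mt 5 False))"
proof -
  have "G_eq ([ly, lx, lx, ly, lX, lX, lX, lx, lx, ly, lX, lX, lX] @ winv [ly, lx, lx, ly, lX, lX, lX, lx, lx, ly, lX, lX, lX]) []" by (rule red_nil) code_simp
  then have "cl [ly, lx, lx, ly, lX, lX, lX, lx, lx, ly, lX, lX, lX] = cl [ly, lx, lx, ly, lX, lX, lX, lx, lx, ly, lX, lX, lX]" by (rule geq_cl)
  then show ?thesis by (simp add: Sw_def Ssyms_def mt_def blockw_def Cw_def)
qed

lemma ST_6_y: "cl (Sw 6 @ blockw True) = cl (Sw (mt 6 True))"
proof -
  have "G_eq ([lx, lx, ly, lX, lX, lX, lx, lx, ly, lX, lX, lX, ly, ly] @ winv [lx, lx, ly, lX, lX, lX, lx, lx, ly, lX, lX, lX]) []" using chk_nth[OF NL_ok, of 57] by (simp add: NL_def decw_def dec_def inv_letter_def)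
  then have "cl [lx, lx, ly, lX, lX, lX, lx, lx, ly, lX, lX, lX, ly, ly] = cl [lx, lx, ly, lX, lX, lX, lx, lx, ly, lX, lX, lX]" by (rule geq_cl)
  then show ?thesis by (simp add: Sw_def Ssyms_def mt_def blockw_def Cw_def)
qed

lemma ST_6_C: "cl (Sw 6 @ blockw False) = cl (Sw (mt 6 False))"
proof -
  have "G_eq ([lx, lx, ly, lX, lX, lX, lx, lx, ly, lX, lX, lX, ly, lx, lx, ly, lX, lX, lX] @ winv [lx, lx, ly, lX, lX, lX, lx, lx, ly, lX, lX, lX, ly, lx, lx, ly, lX, lX, lX]) []" by (rule red_nil) code_simp
  then have "cl [lx, lx, ly, lX, lX, lX, lx, lx, ly, lX, lX, lX, ly, lx, lx, ly, lX, lX, lX] = cl [lx, lx, ly, lX, lX, lX, lx, lx, ly, lX, lX, lX, ly, lx, lx, ly, lX, lX, lX]" by (rule geq_cl)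
  then show ?thesis by (simp add: Sw_def Ssyms_def mt_def blockw_def Cw_def)
qed

lemma ST_7_y: "cl (Sw 7 @ blockw True) = cl (Sw (mt 7 True))"
proof -
  have "G_eq ([lx, lx, ly, lX, lX, lX, ly, lx, lx, ly, lX, lX, lX, ly] @ winv [ly, lx, lx, ly, lX, lX, lX, lx, lx, ly, lX, lX, lX]) []" using chk_nth[OF NL_ok, of 58] by (simp add: NL_def decw_def dec_def inv_letter_def)
  then have "cl [lx, lx, ly, lX, lX, lX, ly, lx, lx, ly, lX, lX, lX, ly] = cl [ly, lx, lx, ly, lX, lX, lX, lx, lx, ly, lX, lX, lX]" by (rule geq_cl)
  then show ?thesis by (simp add: Sw_def Ssyms_def mt_def blockw_def Cw_def)
qed

lemma ST_7_C: "cl (Sw 7 @ blockw False) = cl (Sw (mt 7 False))"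
proof -
  have "G_eq ([lx, lx, ly, lX, lX, lX, ly, lx, lx, ly, lX, lX, lX, lx, lx, ly, lX, lX, lX] @ winv [lx, lx, ly, lX, lX, lX, ly, lx, lx, ly, lX, lX, lX, lx, lx, ly, lX, lX, lX]) []" by (rule red_nil) code_simp
  then have "cl [lx, lx, ly, lX, lX, lX, ly, lx, lx, ly, lX, lX, lX, lx, lx, ly, lX, lX, lX] = cl [lx, lx, ly, lX, lX, lX, ly, lx, lx, ly, lX, lX, lX, lx, lx, ly, lX, lX, lX]" by (rule geq_cl)
  then show ?thesis by (simp add: Sw_def Ssyms_def mt_def blockw_def Cw_def)
qed

lemma ST_8_y: "cl (Sw 8 @ blockw True) = cl (Sw (mt 8 True))"
proof -
  have "G_eq ([ly, lx, lx, ly, lX, lX, lX, lx, lx, ly, lX, lX, lX, ly] @ winv [lx, lx, ly, lX, lX, lX, ly, lx, lx, ly, lX, lX, lX]) []" using chk_nth[OF NL_ok, of 59] by (simp add: NL_def decw_def dec_def inv_letter_def)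
  then have "cl [ly, lx, lx, ly, lX, lX, lX, lx, lx, ly, lX, lX, lX, ly] = cl [lx, lx, ly, lX, lX, lX, ly, lx, lx, ly, lX, lX, lX]" by (rule geq_cl)
  then show ?thesis by (simp add: Sw_def Ssyms_def mt_def blockw_def Cw_def)
qed

lemma ST_8_C: "cl (Sw 8 @ blockw False) = cl (Sw (mt 8 False))"
proof -
  have "G_eq ([ly, lx, lx, ly, lX, lX, lX, lx, lx, ly, lX, lX, lX, lx, lx, ly, lX, lX, lX] @ winv [ly]) []" using chk_nth[OF NL_ok, of 60] by (simp add: NL_def decw_def dec_def inv_letter_def)
  then have "cl [ly, lx, lx, ly, lX, lX, lX, lx, lx, ly, lX, lX, lX, lx, lx, ly, lX, lX, lX] = cl [ly]" by (rule geq_cl)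
  then show ?thesis by (simp add: Sw_def Ssyms_def mt_def blockw_def Cw_def)
qed

lemma ST_9_y: "cl (Sw 9 @ blockw True) = cl (Sw (mt 9 True))"
proof -
  have "G_eq ([ly, lx, lx, ly, lX, lX, lX, ly, ly] @ winv [ly, lx, lx, ly, lX, lX, lX]) []" using chk_nth[OF NL_ok, of 61] by (simp add: NL_def decw_def dec_def inv_letter_def)
  then have "cl [ly, lx, lx, ly, lX, lX, lX, ly, ly] = cl [ly, lx, lx, ly, lX, lX, lX]" by (rule geq_cl)
  then show ?thesis by (simp add: Sw_def Ssyms_def mt_def blockw_def Cw_def)
qed

lemma ST_9_C: "cl (Sw 9 @ blockw False) = cl (Sw (mt 9 False))"
proof -
  have "G_eq ([ly, lx, lx, ly, lX, lX, lX, ly, lx, lx, ly, lX, lX, lX] @ winv [lx, lx, ly, lX, lX, lX, lx, lx, ly, lX, lX, lX, ly]) []" using chk_nth[OF NL_ok, of 62] by (simp add: NL_def decw_def dec_def inv_letter_def)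
  then have "cl [ly, lx, lx, ly, lX, lX, lX, ly, lx, lx, ly, lX, lX, lX] = cl [lx, lx, ly, lX, lX, lX, lx, lx, ly, lX, lX, lX, ly]" by (rule geq_cl)
  then show ?thesis by (simp add: Sw_def Ssyms_def mt_def blockw_def Cw_def)
qed

lemma ST_10_y: "cl (Sw 10 @ blockw True) = cl (Sw (mt 10 True))"
proof -
  have "G_eq ([lx, lx, ly, lX, lX, lX, lx, lx, ly, lX, lX, lX, ly, lx, lx, ly, lX, lX, lX, ly] @ winv [lx, lx, ly, lX, lX, lX, ly, lx, lx, ly, lX, lX, lX, lx, lx, ly, lX, lX, lX]) []" using chk_nth[OF NL_ok, of 63] by (simp add: NL_def decw_def dec_def inv_letter_def)
  then have "cl [lx, lx, ly, lX, lX, lX, lx, lx, ly, lX, lX, lX, ly, lx, lx, ly, lX, lX, lX, ly] = cl [lx, lx, ly, lX, lX, lX, ly, lx, lx, ly, lX, lX, lX, lx, lx, ly, lX, lX, lX]" by (rule geq_cl)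
  then show ?thesis by (simp add: Sw_def Ssyms_def mt_def blockw_def Cw_def)
qed

lemma ST_10_C: "cl (Sw 10 @ blockw False) = cl (Sw (mt 10 False))"
proof -
  have "G_eq ([lx, lx, ly, lX, lX, lX, lx, lx, ly, lX, lX, lX, ly, lx, lx, ly, lX, lX, lX, lx, lx, ly, lX, lX, lX] @ winv [ly, lx, lx, ly, lX, lX, lX, ly]) []" using chk_nth[OF NL_ok, of 64] by (simp add: NL_def decw_def dec_def inv_letter_def)
  then have "cl [lx, lx, ly, lX, lX, lX, lx, lx, ly, lX, lX, lX, ly, lx, lx, ly, lX, lX, lX, lx, lx, ly, lX, lX, lX] = cl [ly, lx, lx, ly, lX, lX, lX, ly]" by (rule geq_cl)
  then show ?thesis by (simp add: Sw_def Ssyms_def mt_def blockw_def Cw_def)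
qed

lemma ST_11_y: "cl (Sw 11 @ blockw True) = cl (Sw (mt 11 True))"
proof -
  have "G_eq ([lx, lx, ly, lX, lX, lX, ly, lx, lx, ly, lX, lX, lX, lx, lx, ly, lX, lX, lX, ly] @ winv [lx, lx, ly, lX, lX, lX, lx, lx, ly, lX, lX, lX, ly, lx, lx, ly, lX, lX, lX]) []" using chk_nth[OF NL_ok, of 65] by (simp add: NL_def decw_def dec_def inv_letter_def)
  then have "cl [lx, lx, ly, lX, lX, lX, ly, lx, lx, ly, lX, lX, lX, lx, lx, ly, lX, lX, lX, ly] = cl [lx, lx, ly, lX, lX, lX, lx, lx, ly, lX, lX, lX, ly, lx, lx, ly, lX, lX, lX]" by (rule geq_cl)
  then show ?thesis by (simp add: Sw_def Ssyms_def mt_def blockw_def Cw_def)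
qed

lemma ST_11_C: "cl (Sw 11 @ blockw False) = cl (Sw (mt 11 False))"
proof -
  have "G_eq ([lx, lx, ly, lX, lX, lX, ly, lx, lx, ly, lX, lX, lX, lx, lx, ly, lX, lX, lX, lx, lx, ly, lX, lX, lX] @ winv [lx, lx, ly, lX, lX, lX, ly]) []" using chk_nth[OF NL_ok, of 66] by (simp add: NL_def decw_def dec_def inv_letter_def)
  then have "cl [lx, lx, ly, lX, lX, lX, ly, lx, lx, ly, lX, lX, lX, lx, lx, ly, lX, lX, lX, lx, lx, ly, lX, lX, lX] = cl [lx, lx, ly, lX, lX, lX, ly]" by (rule geq_cl)
  then show ?thesis by (simp add: Sw_def Ssyms_def mt_def blockw_def Cw_def)
qed

lemma act_append[simp]: "act (u @ v) p = act v (act u p)"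
  by (induction u arbitrary: p) auto

lemma act_letter_range: "p \<in> {1..14} \<Longrightarrow> act_letter a p \<in> {1..14}"
proof -
  assume p: "p \<in> {1..14}"
  obtain b c where a: "a = (b, c)" by (cases a)
  have "perm_x p \<in> {1..14}" "perm_x_inv p \<in> {1..14}" "perm_y p \<in> {1..14}"
    using p by (auto simp: perm_x_def perm_x_inv_def perm_y_def)
  then show ?thesis using p unfolding a by (cases b; cases c) (simp_all add: act_letter_def)
qed

lemma act_range: "p \<in> {1..14} \<Longrightarrow> act w p \<in> {1..14}"
proof (induction w arbitrary: p)
  case Nil then show ?case by simp
next
  case (Cons a w)
  have "act_letter a p \<in> {1..14}" using Cons.prems by (rule act_letter_range)
  then have "act w (act_letter a p) \<in> {1..14}" by (rule Cons.IH)
  then show ?case by simp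
qed

definition pof :: "word \<Rightarrow> nat list" where
  "pof w = [act w 1, act w 2, act w 3, act w 4, act w 5, act w 6, act w 7, act w 8, act w 9, act w 10,
            act w 11, act w 12, act w 13, act w 14]"

lemma range_cases14: "p \<in> {1..14::nat} \<Longrightarrow> p = 1 \<or> p = 2 \<or> p = 3 \<or> p = 4 \<or> p = 5 \<or> p = 6 \<or> p = 7 \<or> p = 8 \<or> p = 9 \<or> p = 10 \<or> p = 11 \<or> p = 12 \<or> p = 13 \<or> p = 14"
  unfolding atLeastAtMost_iff by presburger

lemma pof_act: "pof u = pof v \<Longrightarrow> i \<in> {1..14} \<Longrightarrow> act u i = act v i"
  unfolding pof_def by (drule range_cases14) auto

lemma pof_eqI: "(\<And>i. i \<in> {1..14} \<Longrightarrow> act u i = act v i) \<Longrightarrow> pof u = pof v"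
  by (simp add: pof_def)

lemma px_vals: "perm_x 1 = 2" "perm_x 2 = 3" "perm_x 3 = 4" "perm_x 4 = 5" "perm_x 5 = 6" "perm_x 6 = 7" "perm_x 7 = 1"
  "perm_x 8 = 9" "perm_x 9 = 10" "perm_x 10 = 11" "perm_x 11 = 12" "perm_x 12 = 13" "perm_x 13 = 14" "perm_x 14 = 8"
  by (simp_all add: perm_x_def)
lemma pxi_vals: "perm_x_inv 1 = 7" "perm_x_inv 2 = 1" "perm_x_inv 3 = 2" "perm_x_inv 4 = 3" "perm_x_inv 5 = 4" "perm_x_inv 6 = 5" "perm_x_inv 7 = 6"
  "perm_x_inv 8 = 14" "perm_x_inv 9 = 8" "perm_x_inv 10 = 9" "perm_x_inv 11 = 10" "perm_x_inv 12 = 11" "perm_x_inv 13 = 12" "perm_x_inv 14 = 13"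
  by (simp_all add: perm_x_inv_def)
lemma py_vals: "perm_y 1 = 12" "perm_y 2 = 3" "perm_y 3 = 2" "perm_y 4 = 11" "perm_y 5 = 8" "perm_y 6 = 13" "perm_y 7 = 7"
  "perm_y 8 = 5" "perm_y 9 = 10" "perm_y 10 = 9" "perm_y 11 = 4" "perm_y 12 = 1" "perm_y 13 = 6" "perm_y 14 = 14"
  by (simp_all add: perm_y_def)
lemma al_vals: "act_letter lx p = perm_x p" "act_letter lX p = perm_x_inv p" "act_letter ly p = perm_y p"
  "act_letter lY p = perm_y p" "act_letter lt p = p" "act_letter lT p = p"
  by (simp_all add: act_letter_def)

lemmas actsimps = px_vals pxi_vals py_vals al_vals pof_def

lemma act_letter_inv: "p \<in> {1..14} \<Longrightarrow> act_letter (inv_letter a) (act_letter a p) = p"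
proof -
  assume p: "p \<in> {1..14}"
  obtain b c where a: "a = (b, c)" by (cases a)
  have "perm_x_inv (perm_x p) = p" "perm_x (perm_x_inv p) = p" "perm_y (perm_y p) = p"
    using range_cases14[OF p] by (auto simp: actsimps)
  then show ?thesis unfolding a by (cases b; cases c) (simp_all add: act_letter_def inv_letter_def)
qed

lemma act_winv: "p \<in> {1..14} \<Longrightarrow> act (winv w) (act w p) = p"
proof (induction w arbitrary: p)
  case Nil then show ?case by simp
next
  case (Cons a w)
  have r: "act_letter a p \<in> {1..14}" using Cons.prems by (rule act_letter_range)
  have "act (winv (a # w)) (act (a # w) p) = act_letter (inv_letter a) (act (winv w) (act w (act_letter a p)))"
    by simp
  also have "\<dots> = act_letter (inv_letter a) (act_letter a p)" using Cons.IH[OF r] by simp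
  also have "\<dots> = p" using Cons.prems by (rule act_letter_inv)
  finally show ?case .
qed

lemma pof_app_left: "pof u = pof v \<Longrightarrow> pof (w @ u) = pof (w @ v)"
proof (rule pof_eqI)
  fix i :: nat assume e: "pof u = pof v" and i: "i \<in> {1..14}"
  have "act w i \<in> {1..14}" using i by (rule act_range)
  then have "act u (act w i) = act v (act w i)" by (rule pof_act[OF e])
  then show "act (w @ u) i = act (w @ v) i" by simp
qed

lemma pof_app_right: "pof u = pof v \<Longrightarrow> pof (u @ w) = pof (v @ w)"
proof (rule pof_eqI)
  fix i :: nat assume e: "pof u = pof v" and i: "i \<in> {1..14}"
  have "act u i = act v i" using i by (rule pof_act[OF e])
  then show "act (u @ w) i = act (v @ w) i" by simp
qed

lemma in_N_append[simp]: "in_N (u @ v) \<longleftrightarrow> in_N u \<and> in_N v"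
  by (auto simp: in_N_def)
lemma in_N_Nil[simp]: "in_N []" by (simp add: in_N_def)
lemma in_N_Cons[simp]: "in_N (a # w) \<longleftrightarrow> snd a \<noteq> GT \<and> in_N w" by (simp add: in_N_def)
lemma in_N_winv[simp]: "in_N (winv w) \<longleftrightarrow> in_N w" by (auto simp: in_N_def winv_def inv_letter_def)

lemma range_cases12: "s < (12::nat) \<Longrightarrow> s = 0 \<or> s = 1 \<or> s = 2 \<or> s = 3 \<or> s = 4 \<or> s = 5 \<or> s = 6 \<or> s = 7 \<or> s = 8 \<or> s = 9 \<or> s = 10 \<or> s = 11"
  by presburger

lemma HLx: "p \<in> {1..14} \<Longrightarrow> cl (Rw p @ [lx]) = cl (concat (map blockw (Hx p)) @ Rw (perm_x p))"
  by (drule range_cases14) (elim disjE; simp add: px_vals HLx_1 HLx_2 HLx_3 HLx_4 HLx_5 HLx_6 HLx_7 HLx_8 HLx_9 HLx_10 HLx_11 HLx_12 HLx_13 HLx_14)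
lemma HLy: "p \<in> {1..14} \<Longrightarrow> cl (Rw p @ [ly]) = cl (concat (map blockw (Hy p)) @ Rw (perm_y p))"
  by (drule range_cases14) (elim disjE; simp add: py_vals HLy_1 HLy_2 HLy_3 HLy_4 HLy_5 HLy_6 HLy_7 HLy_8 HLy_9 HLy_10 HLy_11 HLy_12 HLy_13 HLy_14)
lemma PHLx: "p \<in> {1..14} \<Longrightarrow> pof (Rw p @ [lx]) = pof (concat (map blockw (Hx p)) @ Rw (perm_x p))"
  by (drule range_cases14) (elim disjE; simp add: Rw_def Hx_def blockw_def Cw_def actsimps)
lemma PHLy: "p \<in> {1..14} \<Longrightarrow> pof (Rw p @ [ly]) = pof (concat (map blockw (Hy p)) @ Rw (perm_y p))"
  by (drule range_cases14) (elim disjE; simp add: Rw_def Hy_def blockw_def Cw_def actsimps)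

lemma ST: "s < 12 \<Longrightarrow> cl (Sw s @ blockw b) = cl (Sw (mt s b))"
  by (cases b; drule range_cases12; elim disjE; simp only: ST_0_y ST_1_y ST_2_y ST_3_y ST_4_y ST_5_y ST_6_y ST_7_y ST_8_y ST_9_y ST_10_y ST_11_y
     ST_0_C ST_1_C ST_2_C ST_3_C ST_4_C ST_5_C ST_6_C ST_7_C ST_8_C ST_9_C ST_10_C ST_11_C)
lemma PST: "s < 12 \<Longrightarrow> pof (Sw s @ blockw b) = pof (Sw (mt s b)) \<and> mt s b < 12"
  by (cases b; drule range_cases12; elim disjE; simp add: Sw_def Ssyms_def mt_def blockw_def Cw_def actsimps)

lemma STs: "s < 12 \<Longrightarrow> cl (Sw s @ concat (map blockw bs)) = cl (Sw (foldl mt s bs)) \<and>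
   pof (Sw s @ concat (map blockw bs)) = pof (Sw (foldl mt s bs)) \<and> foldl mt s bs < 12"
proof (induction bs arbitrary: s)
  case Nil then show ?case by simp
next
  case (Cons b bs)
  have m: "mt s b < 12" using PST[OF Cons.prems] by simp
  have "cl (Sw s @ concat (map blockw (b # bs))) = cl (Sw s @ blockw b) + cl (concat (map blockw bs))"
    by (simp add: cl_append add.assoc)
  also have "\<dots> = cl (Sw (mt s b)) + cl (concat (map blockw bs))" by (simp only: ST[OF Cons.prems])
  also have "\<dots> = cl (Sw (mt s b) @ concat (map blockw bs))" by (simp only: cl_append)
  finally have c: "cl (Sw s @ concat (map blockw (b # bs))) = cl (Sw (mt s b) @ concat (map blockw bs))" .
  have "pof (Sw s @ concat (map blockw (b # bs))) = pof ((Sw s @ blockw b) @ concat (map blockw bs))" by simp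
  also have "\<dots> = pof (Sw (mt s b) @ concat (map blockw bs))"
    by (rule pof_app_right) (simp add: PST[OF Cons.prems])
  finally show ?case using Cons.IH[OF m] c by simp
qed

definition Inv :: "word \<Rightarrow> bool" where
  "Inv g \<longleftrightarrow> (\<exists>s p. s < 12 \<and> p \<in> {1..14} \<and> cl g = cl (Sw s @ Rw p) \<and> pof g = pof (Sw s @ Rw p))"

lemma Inv_Nil: "Inv []"
  unfolding Inv_def by (rule exI[of _ 0], rule exI[of _ 7]) (simp add: Sw_def Ssyms_def Rw_def)

lemma Inv_step_gen:
  assumes "Inv g"
    and hl: "\<And>p. p \<in> {1..14} \<Longrightarrow> cl (Rw p @ [a]) = cl (concat (map blockw (hs p)) @ Rw (f p))
          \<and> pof (Rw p @ [a]) = pof (concat (map blockw (hs p)) @ Rw (f p)) \<and> f p \<in> {1..14}"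
  shows "Inv (g @ [a])"
proof -
  obtain s p where sp: "s < 12" "p \<in> {1..14}" "cl g = cl (Sw s @ Rw p)" "pof g = pof (Sw s @ Rw p)"
    using assms(1) unfolding Inv_def by blast
  note h = hl[OF sp(2)]
  note st = STs[OF sp(1), of "hs p"]
  have "cl (g @ [a]) = cl (Sw s) + cl (Rw p @ [a])" using sp(3) by (simp add: cl_append add.assoc)
  also have "\<dots> = cl (Sw s @ concat (map blockw (hs p))) + cl (Rw (f p))" using h by (simp add: cl_append add.assoc)
  also have "\<dots> = cl (Sw (foldl mt s (hs p)) @ Rw (f p))" using st by (simp add: cl_append)
  finally have c: "cl (g @ [a]) = cl (Sw (foldl mt s (hs p)) @ Rw (f p))" .
  have "pof (g @ [a]) = pof ((Sw s @ Rw p) @ [a])" using sp(4) by (rule pof_app_right)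
  also have "\<dots> = pof (Sw s @ (Rw p @ [a]))" by simp
  also have "\<dots> = pof (Sw s @ (concat (map blockw (hs p)) @ Rw (f p)))"
    using h by (intro pof_app_left) simp
  also have "\<dots> = pof ((Sw s @ concat (map blockw (hs p))) @ Rw (f p))" by simp
  also have "\<dots> = pof (Sw (foldl mt s (hs p)) @ Rw (f p))"
    by (rule pof_app_right[OF conjunct1[OF conjunct2[OF st]]])
  finally have pp: "pof (g @ [a]) = pof (Sw (foldl mt s (hs p)) @ Rw (f p))" .
  have "foldl mt s (hs p) < 12" "f p \<in> {1..14}" using st h by simp_all
  then show ?thesis unfolding Inv_def using c pp by blast
qed

lemma Inv_x: "Inv g \<Longrightarrow> Inv (g @ [lx])"
proof (rule Inv_step_gen[where hs = Hx and f = perm_x])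
  fix p :: nat assume p: "p \<in> {1..14}"
  have r: "perm_x p \<in> {1..14}" using act_letter_range[OF p, of lx] by (simp only: al_vals)
  show "cl (Rw p @ [lx]) = cl (concat (map blockw (Hx p)) @ Rw (perm_x p)) \<and>
    pof (Rw p @ [lx]) = pof (concat (map blockw (Hx p)) @ Rw (perm_x p)) \<and> perm_x p \<in> {1..14}"
    using HLx[OF p] PHLx[OF p] r by blast
qed
lemma Inv_y: "Inv g \<Longrightarrow> Inv (g @ [ly])"
proof (rule Inv_step_gen[where hs = Hy and f = perm_y])
  fix p :: nat assume p: "p \<in> {1..14}"
  have r: "perm_y p \<in> {1..14}" using act_letter_range[OF p, of ly] by (simp only: al_vals)
  show "cl (Rw p @ [ly]) = cl (concat (map blockw (Hy p)) @ Rw (perm_y p)) \<and>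
    pof (Rw p @ [ly]) = pof (concat (map blockw (Hy p)) @ Rw (perm_y p)) \<and> perm_y p \<in> {1..14}"
    using HLy[OF p] PHLy[OF p] r by blast
qed

lemma Inv_cong: "Inv g \<Longrightarrow> cl g = cl g' \<Longrightarrow> pof g = pof g' \<Longrightarrow> Inv g'"
proof -
  assume a: "Inv g" "cl g = cl g'" "pof g = pof g'"
  then obtain s p where "s < 12" "p \<in> {1..14}" "cl g = cl (Sw s @ Rw p)" "pof g = pof (Sw s @ Rw p)"
    unfolding Inv_def by blast
  then show ?thesis unfolding Inv_def using a by auto
qed

lemma Inv_xs: "Inv g \<Longrightarrow> Inv (g @ replicate n lx)"
proof (induction n arbitrary: g)
  case 0 then show ?case by simp
next
  case (Suc n)
  have "Inv ((g @ [lx]) @ replicate n lx)" using Suc by (intro Suc.IH Inv_x)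
  then show ?case by (simp add: replicate_app_Cons_same)
qed


lemma cl_wx7: "cl (wpow wx 7) = 0" by (rule cl_rel) (unfold relators_def, blast)
lemma cl_wy2: "cl (wpow wy 2) = 0" by (rule cl_rel) (unfold relators_def, blast)
lemma cl_wt2: "cl (wpow wt 2) = 0" by (rule cl_rel) (unfold relators_def, blast)

lemma cl_lX6: "cl [lX] = cl (replicate 6 lx)"
proof -
  have "Xg + cl (replicate 6 lx) = 0" using cl_wx7
    by (simp add: wpow_def wx_def cl_simps numeral_eq_Suc)
  then have "cl (replicate 6 lx) = - Xg" by (simp add: add_eq_0_iff)
  then show ?thesis by (simp add: cl_simps)
qed

lemma Yg_inv: "- Yg = Yg"
proof -
  have "Yg + Yg = 0" using cl_wy2 by (simp add: wpow_def wy_def cl_simps numeral_eq_Suc)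
  then show ?thesis by (simp add: add_eq_0_iff2)
qed
lemma Tg_inv: "- Tg = Tg"
proof -
  have "Tg + Tg = 0" using cl_wt2 by (simp add: wpow_def wt_def cl_simps numeral_eq_Suc)
  then show ?thesis by (simp add: add_eq_0_iff2)
qed

lemma Inv_X: "Inv g \<Longrightarrow> Inv (g @ [lX])"
proof -
  assume "Inv g"
  then have i: "Inv (g @ replicate 6 lx)" by (rule Inv_xs)
  have c: "cl (g @ replicate 6 lx) = cl (g @ [lX])" by (simp add: cl_append cl_lX6)
  have "replicate 6 lx = [lx, lx, lx, lx, lx, lx]" by (simp add: numeral_eq_Suc)
  moreover have "pof [lx, lx, lx, lx, lx, lx] = pof [lX]" by (simp add: actsimps)
  ultimately have "pof (replicate 6 lx) = pof [lX]" by simp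
  then have p: "pof (g @ replicate 6 lx) = pof (g @ [lX])" by (rule pof_app_left)
  show ?thesis by (rule Inv_cong[OF i c p])
qed

lemma Inv_Y: "Inv g \<Longrightarrow> Inv (g @ [lY])"
proof -
  assume "Inv g"
  then have i: "Inv (g @ [ly])" by (rule Inv_y)
  have c: "cl (g @ [ly]) = cl (g @ [lY])" by (simp add: cl_append cl_simps Yg_inv)
  have "pof [ly] = pof [lY]" by (simp add: actsimps)
  then have p: "pof (g @ [ly]) = pof (g @ [lY])" by (rule pof_app_left)
  show ?thesis by (rule Inv_cong[OF i c p])
qed

lemma Inv_all: "in_N g \<Longrightarrow> Inv g"
proof (induction g rule: rev_induct)
  case Nil show ?case by (rule Inv_Nil)
next
  case (snoc a g)
  then have ig: "Inv g" and a: "snd a \<noteq> GT" by auto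
  obtain b c where bc: "a = (b, c)" by (cases a)
  show ?case using a ig Inv_x Inv_X Inv_y Inv_Y unfolding bc by (cases b; cases c) auto
qed

lemma act_Sw7: "s < 12 \<Longrightarrow> act (Sw s) 7 = 7"
  by (drule range_cases12) (elim disjE; simp add: Sw_def Ssyms_def blockw_def Cw_def actsimps)
lemma act_Rw7: "p \<in> {1..14} \<Longrightarrow> act (Rw p) 7 = p"
  by (drule range_cases14) (elim disjE; simp add: Rw_def actsimps)
lemma in_N_Rw: "p \<in> {1..14} \<Longrightarrow> in_N (Rw p)"
  by (drule range_cases14) (elim disjE; simp add: Rw_def)
lemma in_N_Sw: "in_N (Sw s)"
proof -
  have "\<And>b. in_N (blockw b)" by (simp add: blockw_def Cw_def)
  then show ?thesis by (simp add: Sw_def in_N_def)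
qed

definition dS :: "nat \<Rightarrow> nat" where
  "dS v = (if v = 1 then 0 else if v = 6 then 1 else if v = 12 then 2 else if v = 9 then 3 else
     if v = 13 then 4 else if v = 11 then 5 else if v = 10 then 6 else if v = 2 then 7 else
     if v = 3 then 8 else if v = 4 then 9 else if v = 5 then 10 else 11)"

lemma dS_Sw: "s < 12 \<Longrightarrow> dS (act (Sw s) 1) = s"
  by (drule range_cases12) (elim disjE; simp add: dS_def Sw_def Ssyms_def blockw_def Cw_def actsimps)

lemma faithful:
  assumes "in_N u" "in_N v" "pof u = pof v"
  shows "cl u = cl v"
proof -
  obtain s p where sp: "s < 12" "p \<in> {1..14}" "cl u = cl (Sw s @ Rw p)" "pof u = pof (Sw s @ Rw p)"
    using Inv_all[OF assms(1)] unfolding Inv_def by blast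
  obtain s' p' where sp': "s' < 12" "p' \<in> {1..14}" "cl v = cl (Sw s' @ Rw p')" "pof v = pof (Sw s' @ Rw p')"
    using Inv_all[OF assms(2)] unfolding Inv_def by blast
  have e: "pof (Sw s @ Rw p) = pof (Sw s' @ Rw p')" using sp(4) sp'(4) assms(3) by simp
  have "act (Sw s @ Rw p) 7 = act (Sw s' @ Rw p') 7" by (rule pof_act[OF e]) simp
  then have pp: "p = p'" using sp sp' by (simp add: act_Sw7 act_Rw7)
  have "act (Sw s @ Rw p) 1 = act (Sw s' @ Rw p') 1" by (rule pof_act[OF e]) simp
  then have "act (winv (Rw p)) (act (Rw p) (act (Sw s) 1)) = act (winv (Rw p)) (act (Rw p) (act (Sw s') 1))"
    using pp by simp
  moreover have r1: "act (Sw s) 1 \<in> {1..14}" by (rule act_range) simp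
  moreover have r2: "act (Sw s') 1 \<in> {1..14}" by (rule act_range) simp
  ultimately have "act (Sw s) 1 = act (Sw s') 1" by (simp only: act_winv)
  then have "s = s'" using dS_Sw[OF sp(1)] dS_Sw[OF sp'(1)] by metis
  then show ?thesis using sp sp' pp by simp
qed

definition tt :: "nat \<Rightarrow> gr" where "tt p = cl (wconj wt (Rw p))"

lemma cl_wconj: "cl (wconj a g) = - cl g + cl a + cl g"
  by (simp add: wconj_def cl_append cl_winv add.assoc)

lemma cl_wcomm: "cl (wcomm a b) = - cl a + - cl b + cl a + cl b"
  by (simp add: wcomm_def cl_append cl_winv add.assoc)

lemma comm_of: "- a + - b + a + b = (0::gr) \<Longrightarrow> a + b = b + a"
proof -
  assume h: "- a + - b + a + b = 0"
  have "- (b + a) + (a + b) = 0" using h by (simp add: minus_add add.assoc)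
  then have "- (b + a) = - (a + b)" by (simp add: add_eq_0_iff2)
  then show ?thesis by simp
qed

lemma commT_Y: "Tg + Yg = Yg + Tg"
proof -
  have "cl (wcomm wt wy) = 0" by (rule cl_rel) (unfold relators_def, blast)
  then have "- Tg + - Yg + Tg + Yg = 0" by (simp add: cl_wcomm wt_def wy_def Tg_def Yg_def)
  then show ?thesis by (rule comm_of)
qed

lemma commT_C: "Tg + cl Cw = cl Cw + Tg"
proof -
  let ?A = "wconj wt (wpow wx 2)"
  let ?B = "wy @ winv wx"
  have "cl (wcomm ?A ?B) = 0" by (rule cl_rel) (unfold relators_def, blast)
  then have "- cl ?A + - cl ?B + cl ?A + cl ?B = 0" by (simp only: cl_wcomm)
  then have uv: "cl ?A + cl ?B = cl ?B + cl ?A" by (rule comm_of)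
  have w2: "wpow wx 2 = [lx, lx]" by (simp add: wpow_def wx_def numeral_eq_Suc)
  have eA: "cl ?A = - (Xg + Xg) + Tg + (Xg + Xg)"
    by (simp only: cl_wconj w2) (simp add: cl_simps wt_def)
  have eB: "cl ?B = Yg + - Xg" by (simp only: cl_append cl_winv) (simp add: wy_def wx_def Yg_def Xg_def)
  have eC: "cl Cw = (Xg + Xg) + cl ?B + - (Xg + Xg)"
    by (simp only: eB) (simp add: Cw_def cl_simps minus_add add.assoc)
  have eT: "Tg = (Xg + Xg) + cl ?A + - (Xg + Xg)" by (simp add: eA add.assoc)
  have "Tg + cl Cw = (Xg + Xg) + (cl ?A + cl ?B) + - (Xg + Xg)"
    by (simp only: eT eC) (simp add: add.assoc minus_add)
  also have "\<dots> = (Xg + Xg) + (cl ?B + cl ?A) + - (Xg + Xg)" by (simp only: uv)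
  also have "\<dots> = cl Cw + Tg" by (simp only: eT eC) (simp add: add.assoc minus_add)
  finally show ?thesis .
qed

lemma commT_Sw: "cl (Sw s) + Tg = Tg + cl (Sw s)"
proof -
  have "\<And>bs. cl (concat (map blockw bs)) + Tg = Tg + cl (concat (map blockw bs))"
  proof -
    fix bs show "cl (concat (map blockw bs)) + Tg = Tg + cl (concat (map blockw bs))"
    proof (induction bs)
      case Nil then show ?case by (simp add: cl_simps)
    next
      case (Cons b bs)
      have hb: "cl (blockw b) + Tg = Tg + cl (blockw b)"
        using commT_Y commT_C by (cases b) (simp_all add: blockw_def cl_simps)
      have "cl (concat (map blockw (b # bs))) + Tg = cl (blockw b) + (cl (concat (map blockw bs)) + Tg)"
        by (simp add: cl_append add.assoc)
      also have "\<dots> = Tg + cl (concat (map blockw (b # bs)))"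
        using Cons.IH hb by (simp add: cl_append add.assoc[symmetric])
      finally show ?case .
    qed
  qed
  then show ?thesis by (simp add: Sw_def)
qed

lemma lemmaT: "in_N g \<Longrightarrow> cl (wconj wt g) = tt (act g 7)"
proof -
  assume g: "in_N g"
  obtain s p where sp: "s < 12" "p \<in> {1..14}" "cl g = cl (Sw s @ Rw p)" "pof g = pof (Sw s @ Rw p)"
    using Inv_all[OF g] unfolding Inv_def by blast
  have "act g 7 = act (Sw s @ Rw p) 7" by (rule pof_act[OF sp(4)]) simp
  then have a7: "act g 7 = p" using sp by (simp add: act_Sw7 act_Rw7)
  have "cl (wconj wt g) = - cl (Rw p) + (- cl (Sw s) + (Tg + cl (Sw s))) + cl (Rw p)"
    using sp(3) by (simp add: cl_wconj cl_append minus_add add.assoc wt_def Tg_def)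
  also have "\<dots> = - cl (Rw p) + Tg + cl (Rw p)" by (simp add: commT_Sw[symmetric] add.assoc)
  also have "\<dots> = tt p" by (simp add: tt_def cl_wconj wt_def Tg_def)
  finally show ?thesis using a7 by simp
qed

lemma TT: "in_N g \<Longrightarrow> p \<in> {1..14} \<Longrightarrow> - cl g + tt p + cl g = tt (act g p)"
proof -
  assume g: "in_N g" and p: "p \<in> {1..14}"
  have "- cl g + tt p + cl g = cl (wconj wt (Rw p @ g))"
    by (simp add: tt_def cl_wconj cl_append minus_add add.assoc)
  also have "\<dots> = tt (act (Rw p @ g) 7)" using g in_N_Rw[OF p] by (simp add: lemmaT)
  also have "\<dots> = tt (act g p)" using p by (simp add: act_Rw7)
  finally show ?thesis .
qed


primrec ttw :: "nat list \<Rightarrow> gr" where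
  "ttw [] = 0"
| "ttw (p # W) = tt p + ttw W"

declare ttw.simps [simp del]

lemma ttw_Nil: "ttw [] = 0" by (simp add: ttw.simps)

lemma ttw_append: "ttw (U @ V) = ttw U + ttw V"
  by (induction U) (simp_all add: ttw.simps add.assoc)

lemma tt_inv: "- tt p = tt p"
  by (simp add: tt_def cl_wconj minus_add add.assoc wt_def Tg_def[symmetric] Tg_inv)

lemma tt_tt: "tt p + tt p = 0"
  using tt_inv[of p] by (simp add: add_eq_0_iff2)

lemma ttw_rev: "ttw (rev W) = - ttw W"
  by (induction W) (simp_all add: ttw.simps ttw_append minus_add tt_inv)

lemma ttw_conj: "in_N g \<Longrightarrow> set W \<subseteq> {1..14} \<Longrightarrow> - cl g + ttw W + cl g = ttw (map (act g) W)"
proof (induction W)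
  case Nil then show ?case by (simp add: ttw.simps)
next
  case (Cons p W)
  have "- cl g + ttw (p # W) + cl g = (- cl g + tt p + cl g) + (- cl g + ttw W + cl g)"
    by (simp add: ttw.simps add.assoc)
  also have "\<dots> = tt (act g p) + ttw (map (act g) W)" using Cons by (simp add: TT)
  finally show ?case by (simp add: ttw.simps)
qed

lemma conj_fwd: "ttw W = cl pi \<Longrightarrow> in_N g \<Longrightarrow> set W \<subseteq> {1..14} \<Longrightarrow>
   ttw (map (act g) W) = cl (winv g @ pi @ g)"
  by (simp add: ttw_conj[symmetric] cl_append cl_winv add.assoc)

lemma conj_rev: "in_N g \<Longrightarrow> set W \<subseteq> {1..14} \<Longrightarrow> ttw (map (act g) W) = cl pi' \<Longrightarrow>
   ttw W = cl (g @ pi' @ winv g)"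
proof -
  assume g: "in_N g" and W: "set W \<subseteq> {1..14}" and e: "ttw (map (act g) W) = cl pi'"
  have "- cl g + ttw W + cl g = cl pi'" using ttw_conj[OF g W] e by simp
  have "ttw W = cl g + (- cl g + ttw W + cl g) + - cl g" by (simp add: add.assoc)
  then have "ttw W = cl g + cl pi' + - cl g" using \<open>- cl g + ttw W + cl g = cl pi'\<close> by simp
  then show ?thesis by (simp add: cl_append cl_winv add.assoc)
qed

lemma rot_fwd: "ttw W = cl pi \<Longrightarrow> in_N pi \<Longrightarrow> set W \<subseteq> {1..14} \<Longrightarrow>
   ttw (drop k W @ map (act pi) (take k W)) = cl pi"
proof -
  assume e: "ttw W = cl pi" and p: "in_N pi" and W: "set W \<subseteq> {1..14}"
  have tk: "set (take k W) \<subseteq> {1..14}" using W by (meson order_trans set_take_subset)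
  let ?A = "ttw (take k W)" and ?B = "ttw (drop k W)"
  have ab: "?A + ?B = cl pi" using e ttw_append[of "take k W" "drop k W"] by simp
  have "?B = - ?A + (?A + ?B)" by (simp add: add.assoc)
  also have "\<dots> = - ?A + cl pi" using ab by simp
  finally have b: "?B = - ?A + cl pi" .
  have "ttw (drop k W @ map (act pi) (take k W)) = ?B + (- cl pi + ?A + cl pi)"
    using ttw_conj[OF p tk] by (simp add: ttw_append)
  also have "\<dots> = - ?A + (cl pi + - cl pi) + ?A + cl pi" using b by (simp add: add.assoc)
  also have "\<dots> = cl pi" by (simp add: add.assoc)
  finally show ?thesis .
qed

lemma rot_rev: "in_N pi \<Longrightarrow> set W \<subseteq> {1..14} \<Longrightarrow>
   ttw (drop k W @ map (act pi) (take k W)) = cl pi \<Longrightarrow> ttw W = cl pi"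
proof -
  assume p: "in_N pi" and W: "set W \<subseteq> {1..14}" and e: "ttw (drop k W @ map (act pi) (take k W)) = cl pi"
  have tk: "set (take k W) \<subseteq> {1..14}" using W by (meson order_trans set_take_subset)
  have "ttw (drop k W) + (- cl pi + ttw (take k W) + cl pi) = cl pi"
    using e ttw_conj[OF p tk] by (simp add: ttw_append)
  then have "ttw (drop k W) + - cl pi + ttw (take k W) = 0"
    by (metis add.assoc add_left_imp_eq add_0_left add_0_right add_minus_cancel minus_add_cancel)
  then have "ttw (drop k W) = - ttw (take k W) + cl pi"
    by (metis add.assoc add_eq_0_iff2 minus_add minus_minus)
  then have "ttw (take k W) + ttw (drop k W) = cl pi" by (simp add: add.assoc[symmetric])
  then show ?thesis using ttw_append[of "take k W" "drop k W"] by simp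
qed

lemma rev_fwd: "ttw W = cl pi \<Longrightarrow> ttw (rev W) = cl (winv pi)"
  by (simp add: ttw_rev cl_winv)

lemma cancel_rev: "ttw W = P \<Longrightarrow> ttw (a # a # W) = P"
  by (simp add: ttw.simps add.assoc[symmetric] tt_tt)

lemma subst_rev: "ttw (S @ U) = cl rho \<Longrightarrow> ttw (rev U @ Q) = cl pi' \<Longrightarrow> ttw (S @ Q) = cl (rho @ pi')"
proof -
  assume a: "ttw (S @ U) = cl rho" and b: "ttw (rev U @ Q) = cl pi'"
  have "ttw S = ttw S + ttw U + - ttw U" by (simp add: add.assoc)
  also have "\<dots> = cl rho + ttw (rev U)" using a by (simp add: ttw_append ttw_rev)
  finally have "ttw S = cl rho + ttw (rev U)" .
  then have "ttw (S @ Q) = cl rho + ttw (rev U @ Q)" by (simp add: ttw_append add.assoc)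
  then show ?thesis using b by (simp add: cl_append)
qed

lemma coef: "ttw W = cl pi \<Longrightarrow> in_N pi \<Longrightarrow> in_N pi' \<Longrightarrow> pof pi = pof pi' \<Longrightarrow> ttw W = cl pi'"
proof -
  assume a: "ttw W = cl pi" "in_N pi" "in_N pi'" "pof pi = pof pi'"
  have "cl pi = cl pi'" using a(2-4) by (rule faithful)
  then show ?thesis using a(1) by simp
qed

lemma in_N_wpow: "in_N w \<Longrightarrow> in_N (wpow w n)"
  by (induction n) (simp_all add: wpow_def)

primrec Ls :: "word \<Rightarrow> nat \<Rightarrow> nat \<Rightarrow> nat list" where
  "Ls pi a 0 = []"
| "Ls pi a (Suc n) = act (wpow pi n) a # Ls pi a n"

lemma Qn: "in_N pi \<Longrightarrow> a \<in> {1..14} \<Longrightarrow>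
  cl (wpow (pi @ wconj wt (Rw a)) n) = cl (wpow pi n) + ttw (Ls pi a n)"
proof (induction n)
  case 0 then show ?case by (simp add: wpow_def cl_Nil ttw.simps)
next
  case (Suc n)
  have g: "in_N (wpow pi n)" using Suc.prems(1) by (rule in_N_wpow)
  have t: "tt a + cl (wpow pi n) = cl (wpow pi n) + tt (act (wpow pi n) a)"
    using TT[OF g Suc.prems(2)] by (metis add.assoc add_minus_cancel)
  have "cl (wpow (pi @ wconj wt (Rw a)) (Suc n)) = cl pi + (tt a + cl (wpow pi n)) + ttw (Ls pi a n)"
    using Suc by (simp add: wpow_def cl_append tt_def add.assoc)
  also have "\<dots> = cl pi + cl (wpow pi n) + (tt (act (wpow pi n) a) + ttw (Ls pi a n))"
    using t by (simp add: add.assoc)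
  also have "\<dots> = cl (wpow pi (Suc n)) + ttw (Ls pi a (Suc n))"
    by (simp add: wpow_def cl_append ttw.simps)
  finally show ?case .
qed

lemma Qrel: "in_N pi \<Longrightarrow> a \<in> {1..14} \<Longrightarrow> cl (wpow (pi @ wconj wt (Rw a)) n) = 0 \<Longrightarrow>
   ttw (Ls pi a n) = cl (winv (wpow pi n))"
  using Qn[of pi a n] by (simp add: cl_winv add_eq_0_iff)

lemma rel1: "ttw (Ls wy 2 5) = cl (winv (wpow wy 5))"
proof (rule Qrel)
  have "wconj wt (Rw 2) = wconj wt (wpow wx 2)" by (simp add: Rw_def wpow_def wx_def numeral_eq_Suc)
  then show "cl (wpow (wy @ wconj wt (Rw 2)) 5) = 0" by (simp only:) (rule cl_rel, unfold relators_def, blast)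
qed (simp_all add: wy_def)

lemma rel2: "ttw (Ls (wx @ wy @ wpow wx 2) 1 5) = cl (winv (wpow (wx @ wy @ wpow wx 2) 5))"
proof (rule Qrel)
  have "wconj wt (Rw 1) = wconj wt wx" by (simp add: Rw_def wx_def)
  then show "cl (wpow ((wx @ wy @ wpow wx 2) @ wconj wt (Rw 1)) 5) = 0" by (simp only: append_assoc) (rule cl_rel, unfold relators_def, blast)
qed (simp_all add: wy_def wx_def wpow_def numeral_eq_Suc)

lemma rel3: "ttw (Ls wx 7 8) = cl (winv (wpow wx 8))"
proof (rule Qrel)
  have "wconj wt (Rw 7) = wt" by (simp add: Rw_def wconj_def)
  then show "cl (wpow (wx @ wconj wt (Rw 7)) 8) = 0" by (simp only:) (rule cl_rel, unfold relators_def, blast)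
qed (simp_all add: wx_def)



lemma wpow_expl: "wpow w 1 = w" "wpow w 2 = w @ w" "wpow w 3 = w @ w @ w" "wpow w 4 = w @ w @ w @ w"
  "wpow w 5 = w @ w @ w @ w @ w" "wpow w 6 = w @ w @ w @ w @ w @ w" "wpow w 7 = w @ w @ w @ w @ w @ w @ w"
  "wpow w 8 = w @ w @ w @ w @ w @ w @ w @ w"
  by (simp_all add: wpow_def numeral_eq_Suc One_nat_def)

lemma Ls5: "Ls pi a 5 = [act (wpow pi 4) a, act (wpow pi 3) a, act (wpow pi 2) a, act (wpow pi 1) a, a]"
  by (simp add: numeral_eq_Suc One_nat_def wpow_def)
lemma Ls8: "Ls pi a 8 = [act (wpow pi 7) a, act (wpow pi 6) a, act (wpow pi 5) a, act (wpow pi 4) a,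
   act (wpow pi 3) a, act (wpow pi 2) a, act (wpow pi 1) a, a]"
  by (simp add: numeral_eq_Suc One_nat_def wpow_def)

lemma dt1: "drop 1 (x # xs) = xs" "take 1 (x # xs) = [x]"
  by (simp_all add: One_nat_def)

lemmas tsimps = actsimps wpow_expl winv_def inv_letter_def dt1 wx_def wy_def




lemma B1: "ttw [2, 3, 2, 3, 2] = cl [ly]"
proof -
  have "ttw (Ls wy 2 5) = cl (winv (wpow wy 5))" by (rule rel1)
  then have "ttw [2, 3, 2, 3, 2] = cl (winv (wpow wy 5))" by (simp only: Ls5) (simp add: tsimps)
  then show ?thesis by (rule coef) (simp_all add: tsimps)
qed

lemma B2: "ttw [1, 12, 8, 5, 1] = cl [lX, lX, ly, lX]"
proof -
  have "ttw (Ls (wx @ wy @ wpow wx 2) 1 5) = cl (winv (wpow (wx @ wy @ wpow wx 2) 5))" by (rule rel2)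
  then have "ttw [1, 12, 8, 5, 1] = cl (winv (wpow (wx @ wy @ wpow wx 2) 5))" by (simp only: Ls5) (simp add: tsimps)
  then show ?thesis by (rule coef) (simp_all add: tsimps)
qed

lemma B3: "ttw [7, 6, 5, 4, 3, 2, 1, 7] = cl [lX]"
proof -
  have "ttw (Ls wx 7 8) = cl (winv (wpow wx 8))" by (rule rel3)
  then have "ttw [7, 6, 5, 4, 3, 2, 1, 7] = cl (winv (wpow wx 8))" by (simp only: Ls8) (simp add: tsimps)
  then show ?thesis by (rule coef) (simp_all add: tsimps)
qed

lemma CI0: "ttw [1, 5, 8, 12, 1] = cl [lx, ly, lx, lx]"
proof -
  have s3: "ttw [1, 5, 8, 12, 1] = cl (winv [lX, ly, lx] @ [lX, lX, ly, lX] @ [lX, ly, lx])" using conj_fwd[OF B2, of "[lX, ly, lx]"] by (simp add: tsimps)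
  show ?thesis by (rule coef[OF s3]) (simp_all add: tsimps)
qed

lemma CI1: "ttw [1, 2, 1, 2, 1] = cl [lx, ly, lX]"
proof -
  have s3: "ttw [1, 2, 1, 2, 1] = cl (winv [lX] @ [ly] @ [lX])" using conj_fwd[OF B1, of "[lX]"] by (simp add: tsimps)
  show ?thesis by (rule coef[OF s3]) (simp_all add: tsimps)
qed

lemma CI2: "ttw [1, 2, 8, 9, 1] = cl [lx, ly, lX, lX, lX, ly, lx, lx]"
proof -
  have s3: "ttw [1, 2, 8, 9, 1] = cl (winv [lx, lx, ly, lX, lX, ly, lx] @ [lX, lX, ly, lX] @ [lx, lx, ly, lX, lX, ly, lx])" using conj_fwd[OF B2, of "[lx, lx, ly, lX, lX, ly, lx]"] by (simp add: tsimps)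
  show ?thesis by (rule coef[OF s3]) (simp_all add: tsimps)
qed

lemma BC: "ttw [7, 14, 7, 14] = cl []"
proof -
  have P16: "ttw [] = cl []" by (simp add: ttw_Nil cl_Nil)
  have P15: "ttw [1, 2, 8, 9, 1] = cl [lx, ly, lX, lX, lX, ly, lx, lx]" using coef[OF subst_rev[of "[1, 2, 8, 9, 1]" "[]" "[lx, ly, lX, lX, lX, ly, lx, lx]" "[]" "[]"], of "[lx, ly, lX, lX, lX, ly, lx, lx]"] CI2 P16 by (simp add: tsimps)
  note P14 = P15
  have P13: "ttw [1, 2, 8, 9, 1] = cl [lx, ly, lX, lX, lX, ly, lx, lx]" using coef[OF conj_rev[of "[]" "[1, 2, 8, 9, 1]" "[lx, ly, lX, lX, lX, ly, lx, lx]"], of "[lx, ly, lX, lX, lX, ly, lx, lx]"] P14 by (simp add: tsimps)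
  note P12 = P13
  have P11: "ttw [1, 2, 1, 8, 9, 1] = cl [lX, lX, ly, lx, lx]" using coef[OF subst_rev[of "[1, 2, 1]" "[2, 1]" "[lx, ly, lX]" "[8, 9, 1]" "[lx, ly, lX, lX, lX, ly, lx, lx]"], of "[lX, lX, ly, lx, lx]"] CI1 P12 by (simp add: tsimps)
  note P10 = P11
  have P9: "ttw [1, 9, 1, 8, 2, 1] = cl [lX, lX, ly, lx, lx]" using coef[OF conj_rev[of "[lX, lX, lX, ly, lX, lX, lX, ly]" "[1, 9, 1, 8, 2, 1]" "[lX, lX, ly, lx, lx]"], of "[lX, lX, ly, lx, lx]"] P10 by (simp add: tsimps)
  have P8: "ttw [1, 2, 8, 1, 9, 1] = cl [lX, lX, ly, lx, lx]" using rot_rev[of "[lX, lX, ly, lx, lx]" "[1, 2, 8, 1, 9, 1]" 3] P9 by (simp add: tsimps)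
  have P7: "ttw [1, 2, 1, 8, 1, 9, 1] = cl [lx, ly, lX, lX, lX, ly, lx, lx]" using coef[OF subst_rev[of "[1, 2, 1]" "[2, 1]" "[lx, ly, lX]" "[8, 1, 9, 1]" "[lX, lX, ly, lx, lx]"], of "[lx, ly, lX, lX, lX, ly, lx, lx]"] CI1 P8 by (simp add: tsimps)
  note P6 = P7
  have P5: "ttw [8, 5, 8, 1, 8, 12, 8] = cl [lX, lX, ly, lX]" using coef[OF conj_rev[of "[lx, lx, ly, lx, lx, lx, ly]" "[8, 5, 8, 1, 8, 12, 8]" "[lx, ly, lX, lX, lX, ly, lx, lx]"], of "[lX, lX, ly, lX]"] P6 by (simp add: tsimps)
  have P4: "ttw [1, 12, 8, 5, 8, 1, 8] = cl [lX, lX, ly, lX]" using rot_rev[of "[lX, lX, ly, lX]" "[1, 12, 8, 5, 8, 1, 8]" 2] P5 by (simp add: tsimps)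
  have P3: "ttw [1, 8, 1, 8] = cl []" using coef[OF subst_rev[of "[1]" "[5, 8, 12, 1]" "[lx, ly, lx, lx]" "[8, 1, 8]" "[lX, lX, ly, lX]"], of "[]"] CI0 P4 by (simp add: tsimps)
  note P2 = P3
  have P1: "ttw [7, 14, 7, 14] = cl []" using coef[OF conj_rev[of "[lx]" "[7, 14, 7, 14]" "[]"], of "[]"] P2 by (simp add: tsimps)
  note P0 = P1
  show ?thesis by (rule P0)
qed

lemma LI0: "ttw [1, 5, 8, 12, 1] = cl [lx, ly, lx, lx]"
proof -
  have s3: "ttw [1, 5, 8, 12, 1] = cl (winv [lX, ly, lx] @ [lX, lX, ly, lX] @ [lX, ly, lx])" using conj_fwd[OF B2, of "[lX, ly, lx]"] by (simp add: tsimps)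
  show ?thesis by (rule coef[OF s3]) (simp_all add: tsimps)
qed

lemma LI1: "ttw [1, 2, 1, 2, 1] = cl [lx, ly, lX]"
proof -
  have s3: "ttw [1, 2, 1, 2, 1] = cl (winv [lX] @ [ly] @ [lX])" using conj_fwd[OF B1, of "[lX]"] by (simp add: tsimps)
  show ?thesis by (rule coef[OF s3]) (simp_all add: tsimps)
qed

lemma LI2: "ttw [1, 2, 8, 9, 1] = cl [lx, ly, lX, lX, lX, ly, lx, lx]"
proof -
  have s3: "ttw [1, 2, 8, 9, 1] = cl (winv [lx, lx, ly, lX, lX, ly, lx] @ [lX, lX, ly, lX] @ [lx, lx, ly, lX, lX, ly, lx])" using conj_fwd[OF B2, of "[lx, lx, ly, lX, lX, ly, lx]"] by (simp add: tsimps)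
  show ?thesis by (rule coef[OF s3]) (simp_all add: tsimps)
qed

lemma LI3: "ttw [9, 3, 9, 3, 9] = cl [lx, ly, lx, lx, lx, ly, lx, lx]"
proof -
  have s3: "ttw [9, 3, 9, 3, 9] = cl (winv [lX, lX, lX, ly, lx, lx, lx] @ [ly] @ [lX, lX, lX, ly, lx, lx, lx])" using conj_fwd[OF B1, of "[lX, lX, lX, ly, lx, lx, lx]"] by (simp add: tsimps)
  show ?thesis by (rule coef[OF s3]) (simp_all add: tsimps)
qed

lemma LI4: "ttw [9, 3, 2, 10, 9] = cl [lX, lX, lX, ly, lx, lx, lx, ly]"
proof -
  have s3: "ttw [9, 3, 2, 10, 9] = cl (winv [lx, lx, lx, ly, lX, lX] @ [lX, lX, ly, lX] @ [lx, lx, lx, ly, lX, lX])" using conj_fwd[OF B2, of "[lx, lx, lx, ly, lX, lX]"] by (simp add: tsimps)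
  show ?thesis by (rule coef[OF s3]) (simp_all add: tsimps)
qed

lemma LI5: "ttw [1, 3, 1, 3, 1] = cl [lx, ly, lX, lX, lX, ly, lx, lx, lx]"
proof -
  have s3: "ttw [1, 3, 1, 3, 1] = cl (winv [lX, ly, lX, lX, lX, ly, lx, lx, ly] @ [ly] @ [lX, ly, lX, lX, lX, ly, lx, lx, ly])" using conj_fwd[OF B1, of "[lX, ly, lX, lX, lX, ly, lx, lx, ly]"] by (simp add: tsimps)
  show ?thesis by (rule coef[OF s3]) (simp_all add: tsimps)
qed

lemma LI6: "ttw [2, 1, 9, 8, 2] = cl [lX, lX, ly, lx, lx, lx, ly, lX]"
proof -
  have s3: "ttw [2, 1, 9, 8, 2] = cl (winv [ly, lx, lx, ly, lX, lX, ly, lx] @ [lX, lX, ly, lX] @ [ly, lx, lx, ly, lX, lX, ly, lx])" using conj_fwd[OF B2, of "[ly, lx, lx, ly, lX, lX, ly, lx]"] by (simp add: tsimps)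
  show ?thesis by (rule coef[OF s3]) (simp_all add: tsimps)
qed

lemma LI7: "ttw [2, 3, 9, 10, 2] = cl [ly, lX, lX, lX, ly, lx, lx, lx]"
proof -
  have s3: "ttw [2, 3, 9, 10, 2] = cl (winv [lx, lx, ly, lX, lX, ly, lx, lx] @ [lX, lX, ly, lX] @ [lx, lx, ly, lX, lX, ly, lx, lx])" using conj_fwd[OF B2, of "[lx, lx, ly, lX, lX, ly, lx, lx]"] by (simp add: tsimps)
  show ?thesis by (rule coef[OF s3]) (simp_all add: tsimps)
qed

lemma LI8: "ttw [3, 7, 10, 14, 3] = cl [lX, ly, lX, lX, lX]"
proof -
  have s3: "ttw [3, 7, 10, 14, 3] = cl (winv [lX, ly, lx, lx, lx] @ [lX, lX, ly, lX] @ [lX, ly, lx, lx, lx])" using conj_fwd[OF B2, of "[lX, ly, lx, lx, lx]"] by (simp add: tsimps)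
  show ?thesis by (rule coef[OF s3]) (simp_all add: tsimps)
qed

lemma LI9: "ttw [12, 14, 5, 7, 12] = cl [lx, ly, lX, lX, ly, lx, lx, lx]"
proof -
  have s3: "ttw [12, 14, 5, 7, 12] = cl (winv [lX, lX, lX, ly, lX, lX, lX] @ [lX, lX, ly, lX] @ [lX, lX, lX, ly, lX, lX, lX])" using conj_fwd[OF B2, of "[lX, lX, lX, ly, lX, lX, lX]"] by (simp add: tsimps)
  show ?thesis by (rule coef[OF s3]) (simp_all add: tsimps)
qed

lemma LI10: "ttw [12, 1, 5, 8, 12] = cl [lx, ly, lx, lx]"
proof -
  have s3: "ttw [12, 1, 5, 8, 12] = cl (winv [ly] @ [lX, lX, ly, lX] @ [ly])" using conj_fwd[OF B2, of "[ly]"] by (simp add: tsimps)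
  show ?thesis by (rule coef[OF s3]) (simp_all add: tsimps)
qed

lemma LI11: "ttw [3, 1, 10, 8, 3] = cl [ly, lX, lX, ly, lx]"
proof -
  have s3: "ttw [3, 1, 10, 8, 3] = cl (winv [lX, ly, lx, lx, lx, ly, lx] @ [lX, lX, ly, lX] @ [lX, ly, lx, lx, lx, ly, lx])" using conj_fwd[OF B2, of "[lX, ly, lx, lx, lx, ly, lx]"] by (simp add: tsimps)
  show ?thesis by (rule coef[OF s3]) (simp_all add: tsimps)
qed

lemma L0: "ttw [1, 8, 5, 12, 14, 7] = cl []"
proof -
  have P80: "ttw [] = cl []" by (simp add: ttw_Nil cl_Nil)
  have P79: "ttw [1, 2, 8, 9, 1] = cl [lx, ly, lX, lX, lX, ly, lx, lx]" using coef[OF subst_rev[of "[1, 2, 8, 9, 1]" "[]" "[lx, ly, lX, lX, lX, ly, lx, lx]" "[]" "[]"], of "[lx, ly, lX, lX, lX, ly, lx, lx]"] LI2 P80 by (simp add: tsimps)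
  note P78 = P79
  have P77: "ttw [3, 6, 10, 13, 3] = cl [ly, lX, lX, lX]" using coef[OF conj_rev[of "[lX, ly, lX, lX, lX, ly, lx]" "[3, 6, 10, 13, 3]" "[lx, ly, lX, lX, lX, ly, lx, lx]"], of "[ly, lX, lX, lX]"] P78 by (simp add: tsimps)
  note P76 = P77
  have P75: "ttw [3, 1, 10, 8, 6, 10, 13, 3] = cl [ly, lX, lX, lX, ly, lx, lx, lx]" using coef[OF subst_rev[of "[3, 1, 10, 8]" "[3]" "[ly, lX, lX, ly, lx]" "[6, 10, 13, 3]" "[ly, lX, lX, lX]"], of "[ly, lX, lX, lX, ly, lx, lx, lx]"] LI11 P76 by (simp add: tsimps)
  have P74: "ttw [1, 2, 3, 1, 10, 8, 6, 10] = cl [ly, lX, lX, lX, ly, lx, lx, lx]" using rot_rev[of "[ly, lX, lX, lX, ly, lx, lx, lx]" "[1, 2, 3, 1, 10, 8, 6, 10]" 2] P75 by (simp add: tsimps)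
  have P73: "ttw [9, 7, 6, 9, 13, 2, 10, 13] = cl [ly, lx, lx, lx, ly, lX, lX, lX]" using coef[OF conj_rev[of "[lx, lx, lx, ly]" "[9, 7, 6, 9, 13, 2, 10, 13]" "[ly, lX, lX, lX, ly, lx, lx, lx]"], of "[ly, lx, lx, lx, ly, lX, lX, lX]"] P74 by (simp add: tsimps)
  have P72: "ttw [1, 2, 14, 9, 7, 6, 9, 13] = cl [ly, lx, lx, lx, ly, lX, lX, lX]" using rot_rev[of "[ly, lx, lx, lx, ly, lX, lX, lX]" "[1, 2, 14, 9, 7, 6, 9, 13]" 3] P73 by (simp add: tsimps)
  have P71: "ttw [1, 2, 1, 14, 9, 7, 6, 9, 13] = cl [lX, lX, ly, lx, lx, lx, ly]" using coef[OF subst_rev[of "[1, 2, 1]" "[2, 1]" "[lx, ly, lX]" "[14, 9, 7, 6, 9, 13]" "[ly, lx, lx, lx, ly, lX, lX, lX]"], of "[lX, lX, ly, lx, lx, lx, ly]"] LI1 P72 by (simp add: tsimps)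
  note P70 = P71
  have P69: "ttw [13, 9, 13, 5, 2, 12, 1, 2, 8] = cl [lx, ly, lX, lX, ly, lx, lx, lx, ly]" using coef[OF conj_rev[of "[lx, lx, lx, ly, lx, lx, ly]" "[13, 9, 13, 5, 2, 12, 1, 2, 8]" "[lX, lX, ly, lx, lx, lx, ly]"], of "[lx, ly, lX, lX, ly, lx, lx, lx, ly]"] P70 by (simp add: tsimps)
  have P68: "ttw [1, 2, 8, 7, 2, 14, 13, 9, 13] = cl [lx, ly, lX, lX, ly, lx, lx, lx, ly]" using rot_rev[of "[lx, ly, lX, lX, ly, lx, lx, lx, ly]" "[1, 2, 8, 7, 2, 14, 13, 9, 13]" 6] P69 by (simp add: tsimps)
  have P67: "ttw [1, 2, 1, 8, 7, 2, 14, 13, 9, 13] = cl [lX, ly, lx, lx, lx, ly]" using coef[OF subst_rev[of "[1, 2, 1]" "[2, 1]" "[lx, ly, lX]" "[8, 7, 2, 14, 13, 9, 13]" "[lx, ly, lX, lX, ly, lx, lx, lx, ly]"], of "[lX, ly, lx, lx, lx, ly]"] LI1 P68 by (simp add: tsimps)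
  note P66 = P67
  have P65: "ttw [5, 13, 5, 12, 2, 13, 9, 3, 6, 3] = cl [ly, lX, lX]" using coef[OF conj_rev[of "[ly, lX, lX, lX, ly]" "[5, 13, 5, 12, 2, 13, 9, 3, 6, 3]" "[lX, ly, lx, lx, lx, ly]"], of "[ly, lX, lX]"] P66 by (simp add: tsimps)
  have P64: "ttw [12, 8, 5, 13, 5, 12, 2, 13, 9, 3] = cl [ly, lX, lX]" using rot_rev[of "[ly, lX, lX]" "[12, 8, 5, 13, 5, 12, 2, 13, 9, 3]" 2] P65 by (simp add: tsimps)
  have P63: "ttw [12, 1, 13, 5, 12, 2, 13, 9, 3] = cl [lx, ly, lx, lx, ly, lX, lX]" using coef[OF subst_rev[of "[12, 1]" "[5, 8, 12]" "[lx, ly, lx, lx]" "[13, 5, 12, 2, 13, 9, 3]" "[ly, lX, lX]"], of "[lx, ly, lx, lx, ly, lX, lX]"] LI10 P64 by (simp add: tsimps)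
  have P62: "ttw [1, 2, 5, 12, 1, 13, 5, 12, 2] = cl [lx, ly, lx, lx, ly, lX, lX]" using rot_rev[of "[lx, ly, lx, lx, ly, lX, lX]" "[1, 2, 5, 12, 1, 13, 5, 12, 2]" 3] P63 by (simp add: tsimps)
  have P61: "ttw [3, 8, 14, 7, 3, 4, 14, 7, 8] = cl [lx, lx, ly, lx, lx, lx, ly]" using coef[OF conj_rev[of "[lX, lX, lX, ly, lx]" "[3, 8, 14, 7, 3, 4, 14, 7, 8]" "[lx, ly, lx, lx, ly, lX, lX]"], of "[lx, lx, ly, lx, lx, lx, ly]"] P62 by (simp add: tsimps)
  have P60: "ttw [1, 2, 9, 11, 3, 2, 9, 1, 3] = cl [lx, lx, ly, lx, lx, lx, ly]" using rot_rev[of "[lx, lx, ly, lx, lx, lx, ly]" "[1, 2, 9, 11, 3, 2, 9, 1, 3]" 8] P61 by (simp add: tsimps)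
  have P59: "ttw [1, 2, 1, 9, 11, 3, 2, 9, 1, 3] = cl [ly, lx, lx, ly]" using coef[OF subst_rev[of "[1, 2, 1]" "[2, 1]" "[lx, ly, lX]" "[9, 11, 3, 2, 9, 1, 3]" "[lx, lx, ly, lx, lx, lx, ly]"], of "[ly, lx, lx, ly]"] LI1 P60 by (simp add: tsimps)
  note P58 = P59
  have P57: "ttw [10, 2, 10, 9, 6, 5, 2, 9, 10, 5] = cl [lx]" using coef[OF conj_rev[of "[ly, lX, lX, lX, ly, lx, lx]" "[10, 2, 10, 9, 6, 5, 2, 9, 10, 5]" "[ly, lx, lx, ly]"], of "[lx]"] P58 by (simp add: tsimps)
  have P56: "ttw [1, 9, 8, 5, 4, 1, 8, 9, 4, 10] = cl [lx]" using rot_rev[of "[lx]" "[1, 9, 8, 5, 4, 1, 8, 9, 4, 10]" 9] P57 by (simp add: tsimps)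
  have P55: "ttw [1, 2, 5, 4, 1, 8, 9, 4, 10] = cl [lx, ly, lX, lX, lX, ly, lx, lx, lx]" using coef[OF subst_rev[of "[1, 2]" "[8, 9, 1]" "[lx, ly, lX, lX, lX, ly, lx, lx]" "[5, 4, 1, 8, 9, 4, 10]" "[lx]"], of "[lx, ly, lX, lX, lX, ly, lx, lx, lx]"] LI2 P56 by (simp add: tsimps)
  note P54 = P55
  have P53: "ttw [9, 10, 11, 1, 9, 2, 3, 1, 6] = cl [ly, lx, lx, ly, lX, lX, ly]" using coef[OF conj_rev[of "[lX, lX, ly, lX, lX, ly]" "[9, 10, 11, 1, 9, 2, 3, 1, 6]" "[lx, ly, lX, lX, lX, ly, lx, lx, lx]"], of "[ly, lx, lx, ly, lX, lX, ly]"] P54 by (simp add: tsimps)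
  have P52: "ttw [1, 2, 9, 10, 11, 1, 9, 2, 3] = cl [ly, lx, lx, ly, lX, lX, ly]" using rot_rev[of "[ly, lx, lx, ly, lX, lX, ly]" "[1, 2, 9, 10, 11, 1, 9, 2, 3]" 2] P53 by (simp add: tsimps)
  have P51: "ttw [1, 2, 1, 9, 10, 11, 1, 9, 2, 3] = cl [lX, ly, lX, lX, lX, ly, lx, lx, ly]" using coef[OF subst_rev[of "[1, 2, 1]" "[2, 1]" "[lx, ly, lX]" "[9, 10, 11, 1, 9, 2, 3]" "[ly, lx, lx, ly, lX, lX, ly]"], of "[lX, ly, lX, lX, lX, ly, lx, lx, ly]"] LI1 P52 by (simp add: tsimps)
  note P50 = P51
  have P49: "ttw [8, 7, 8, 14, 10, 4, 8, 14, 7, 3] = cl [lx, ly, lX, lX, lX, ly, lX, lX]" using coef[OF conj_rev[of "[lx, lx, ly, lX, lX, lX, ly, lx, lx]" "[8, 7, 8, 14, 10, 4, 8, 14, 7, 3]" "[lX, ly, lX, lX, lX, ly, lx, lx, ly]"], of "[lx, ly, lX, lX, lX, ly, lX, lX]"] P50 by (simp add: tsimps)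
  have P48: "ttw [12, 7, 5, 10, 9, 7, 5, 12, 3, 8] = cl [lx, ly, lX, lX, lX, ly, lX, lX]" using rot_rev[of "[lx, ly, lX, lX, lX, ly, lX, lX]" "[12, 7, 5, 10, 9, 7, 5, 12, 3, 8]" 9] P49 by (simp add: tsimps)
  have P47: "ttw [12, 14, 10, 9, 7, 5, 12, 3, 8] = cl [ly]" using coef[OF subst_rev[of "[12, 14]" "[5, 7, 12]" "[lx, ly, lX, lX, ly, lx, lx, lx]" "[10, 9, 7, 5, 12, 3, 8]" "[lx, ly, lX, lX, lX, ly, lX, lX]"], of "[ly]"] LI9 P48 by (simp add: tsimps)
  have P46: "ttw [1, 2, 5, 12, 14, 10, 9, 7, 5] = cl [ly]" using rot_rev[of "[ly]" "[1, 2, 5, 12, 14, 10, 9, 7, 5]" 3] P47 by (simp add: tsimps)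
  have P45: "ttw [5, 13, 4, 11, 9, 1, 6, 2, 4] = cl [lx, lx, lx, ly, lX, lX, lX, ly, lx]" using coef[OF conj_rev[of "[ly, lX, lX, lX, ly]" "[5, 13, 4, 11, 9, 1, 6, 2, 4]" "[ly]"], of "[lx, lx, lx, ly, lX, lX, lX, ly, lx]"] P46 by (simp add: tsimps)
  have P44: "ttw [1, 2, 12, 5, 13, 4, 11, 9, 1] = cl [lx, lx, lx, ly, lX, lX, lX, ly, lx]" using rot_rev[of "[lx, lx, lx, ly, lX, lX, lX, ly, lx]" "[1, 2, 12, 5, 13, 4, 11, 9, 1]" 3] P45 by (simp add: tsimps)
  have P43: "ttw [1, 2, 1, 12, 5, 13, 4, 11, 9, 1] = cl [ly, lX, lX, ly, lx, lx, lx, ly, lx]" using coef[OF subst_rev[of "[1, 2, 1]" "[2, 1]" "[lx, ly, lX]" "[12, 5, 13, 4, 11, 9, 1]" "[lx, lx, lx, ly, lX, lX, lX, ly, lx]"], of "[ly, lX, lX, ly, lx, lx, lx, ly, lx]"] LI1 P44 by (simp add: tsimps)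
  note P42 = P43
  have P41: "ttw [10, 2, 10, 1, 8, 7, 13, 6, 9, 10] = cl [ly, lx, lx, lx, ly, lx]" using coef[OF conj_rev[of "[ly, lX, lX, lX, ly, lx, lx]" "[10, 2, 10, 1, 8, 7, 13, 6, 9, 10]" "[ly, lX, lX, ly, lx, lx, lx, ly, lx]"], of "[ly, lx, lx, lx, ly, lx]"] P42 by (simp add: tsimps)
  have P40: "ttw [3, 14, 10, 2, 10, 1, 8, 7, 13, 6] = cl [ly, lx, lx, lx, ly, lx]" using rot_rev[of "[ly, lx, lx, lx, ly, lx]" "[3, 14, 10, 2, 10, 1, 8, 7, 13, 6]" 2] P41 by (simp add: tsimps)
  have P39: "ttw [3, 7, 2, 10, 1, 8, 7, 13, 6] = cl [lx, lx, ly, lX, lX, lX, ly, lx, lx]" using coef[OF subst_rev[of "[3, 7]" "[10, 14, 3]" "[lX, ly, lX, lX, lX]" "[2, 10, 1, 8, 7, 13, 6]" "[ly, lx, lx, lx, ly, lx]"], of "[lx, lx, ly, lX, lX, lX, ly, lx, lx]"] LI8 P40 by (simp add: tsimps)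
  have P38: "ttw [1, 2, 5, 12, 3, 7, 2, 10, 1] = cl [lx, lx, ly, lX, lX, lX, ly, lx, lx]" using rot_rev[of "[lx, lx, ly, lX, lX, lX, ly, lx, lx]" "[1, 2, 5, 12, 3, 7, 2, 10, 1]" 4] P39 by (simp add: tsimps)
  have P37: "ttw [5, 7, 6, 13, 2, 3, 7, 9, 5] = cl [lx, ly, lX, lX, ly, lx, lx, ly, lX]" using coef[OF conj_rev[of "[lx, ly, lX, lX, ly, lx, lx, lx, ly, lx]" "[5, 7, 6, 13, 2, 3, 7, 9, 5]" "[lx, lx, ly, lX, lX, lX, ly, lx, lx]"], of "[lx, ly, lX, lX, ly, lx, lx, ly, lX]"] P38 by (simp add: tsimps)
  have P36: "ttw [1, 2, 7, 3, 9, 12, 5, 7, 6] = cl [lx, ly, lX, lX, ly, lx, lx, ly, lX]" using rot_rev[of "[lx, ly, lX, lX, ly, lx, lx, ly, lX]" "[1, 2, 7, 3, 9, 12, 5, 7, 6]" 6] P37 by (simp add: tsimps)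
  have P35: "ttw [1, 2, 1, 7, 3, 9, 12, 5, 7, 6] = cl [lX, ly, lx, lx, ly, lX]" using coef[OF subst_rev[of "[1, 2, 1]" "[2, 1]" "[lx, ly, lX]" "[7, 3, 9, 12, 5, 7, 6]" "[lx, ly, lX, lX, ly, lx, lx, ly, lX]"], of "[lX, ly, lx, lx, ly, lX]"] LI1 P36 by (simp add: tsimps)
  note P34 = P35
  have P33: "ttw [10, 9, 10, 8, 6, 2, 11, 4, 8, 7] = cl [lx, lx, ly, lX, lX, lX, ly, lx, lx, ly]" using coef[OF conj_rev[of "[lx, ly, lx, lx, lx, ly, lx]" "[10, 9, 10, 8, 6, 2, 11, 4, 8, 7]" "[lX, ly, lx, lx, ly, lX]"], of "[lx, lx, ly, lX, lX, lX, ly, lx, lx, ly]"] P34 by (simp add: tsimps)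
  have P32: "ttw [2, 10, 9, 10, 8, 6, 2, 11, 4, 8] = cl [lx, lx, ly, lX, lX, lX, ly, lx, lx, ly]" using rot_rev[of "[lx, lx, ly, lX, lX, lX, ly, lx, lx, ly]" "[2, 10, 9, 10, 8, 6, 2, 11, 4, 8]" 1] P33 by (simp add: tsimps)
  have P31: "ttw [2, 3, 10, 8, 6, 2, 11, 4, 8] = cl [lX, lX, ly, lx, lx]" using coef[OF subst_rev[of "[2, 3]" "[9, 10, 2]" "[ly, lX, lX, lX, ly, lx, lx, lx]" "[10, 8, 6, 2, 11, 4, 8]" "[lx, lx, ly, lX, lX, lX, ly, lx, lx, ly]"], of "[lX, lX, ly, lx, lx]"] LI7 P32 by (simp add: tsimps)
  have P30: "ttw [1, 2, 3, 10, 8, 6, 2, 11, 4] = cl [lX, lX, ly, lx, lx]" using rot_rev[of "[lX, lX, ly, lx, lx]" "[1, 2, 3, 10, 8, 6, 2, 11, 4]" 1] P31 by (simp add: tsimps)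
  have P29: "ttw [8, 7, 3, 10, 1, 12, 7, 4, 11] = cl [lx, ly, lx, lx, lx, ly, lx, lx]" using coef[OF conj_rev[of "[lx, lx, ly, lX, lX, lX, ly, lx, lx]" "[8, 7, 3, 10, 1, 12, 7, 4, 11]" "[lX, lX, ly, lx, lx]"], of "[lx, ly, lx, lx, lx, ly, lx, lx]"] P30 by (simp add: tsimps)
  have P28: "ttw [2, 8, 5, 7, 6, 13, 8, 7, 3] = cl [lx, ly, lx, lx, lx, ly, lx, lx]" using rot_rev[of "[lx, ly, lx, lx, lx, ly, lx, lx]" "[2, 8, 5, 7, 6, 13, 8, 7, 3]" 6] P29 by (simp add: tsimps)
  have P27: "ttw [2, 1, 9, 5, 7, 6, 13, 8, 7, 3] = cl [lX, ly, lx, lx, lx]" using coef[OF subst_rev[of "[2, 1, 9]" "[8, 2]" "[lX, lX, ly, lx, lx, lx, ly, lX]" "[5, 7, 6, 13, 8, 7, 3]" "[lx, ly, lx, lx, lx, ly, lx, lx]"], of "[lX, ly, lx, lx, lx]"] LI6 P28 by (simp add: tsimps)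
  have P26: "ttw [1, 2, 1, 9, 5, 7, 6, 13, 8, 7] = cl [lX, ly, lx, lx, lx]" using rot_rev[of "[lX, ly, lx, lx, lx]" "[1, 2, 1, 9, 5, 7, 6, 13, 8, 7]" 1] P27 by (simp add: tsimps)
  have P25: "ttw [1, 3, 1, 10, 2, 6, 4, 11, 8, 6] = cl [ly, lx, lx, lx, ly]" using coef[OF conj_rev[of "[ly, lX, lX, ly, lx, lx, lx, ly]" "[1, 3, 1, 10, 2, 6, 4, 11, 8, 6]" "[lX, ly, lx, lx, lx]"], of "[ly, lx, lx, lx, ly]"] P26 by (simp add: tsimps)
  note P24 = P25
  have P23: "ttw [1, 3, 10, 2, 6, 4, 11, 8, 6] = cl [ly, lx, lx, lx]" using coef[OF subst_rev[of "[1, 3]" "[1, 3, 1]" "[lx, ly, lX, lX, lX, ly, lx, lx, lx]" "[10, 2, 6, 4, 11, 8, 6]" "[ly, lx, lx, lx, ly]"], of "[ly, lx, lx, lx]"] LI5 P24 by (simp add: tsimps)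
  have P22: "ttw [1, 2, 1, 3, 10, 2, 6, 4, 11] = cl [ly, lx, lx, lx]" using rot_rev[of "[ly, lx, lx, lx]" "[1, 2, 1, 3, 10, 2, 6, 4, 11]" 2] P23 by (simp add: tsimps)
  have P21: "ttw [11, 8, 11, 13, 6, 8, 3, 7, 14] = cl [ly, lX, lX, ly, lx]" using coef[OF conj_rev[of "[ly, lX, lX, lX]" "[11, 8, 11, 13, 6, 8, 3, 7, 14]" "[ly, lx, lx, lx]"], of "[ly, lX, lX, ly, lx]"] P22 by (simp add: tsimps)
  have P20: "ttw [9, 10, 8, 5, 12, 11, 8, 11, 13] = cl [ly, lX, lX, ly, lx]" using rot_rev[of "[ly, lX, lX, ly, lx]" "[9, 10, 8, 5, 12, 11, 8, 11, 13]" 5] P21 by (simp add: tsimps)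
  have P19: "ttw [9, 3, 2, 8, 5, 12, 11, 8, 11, 13] = cl [lx, lx, lx, ly]" using coef[OF subst_rev[of "[9, 3, 2]" "[10, 9]" "[lX, lX, lX, ly, lx, lx, lx, ly]" "[8, 5, 12, 11, 8, 11, 13]" "[ly, lX, lX, ly, lx]"], of "[lx, lx, lx, ly]"] LI4 P20 by (simp add: tsimps)
  have P18: "ttw [1, 2, 1, 3, 9, 3, 2, 8, 5, 12] = cl [lx, lx, lx, ly]" using rot_rev[of "[lx, lx, lx, ly]" "[1, 2, 1, 3, 9, 3, 2, 8, 5, 12]" 4] P19 by (simp add: tsimps)
  have P17: "ttw [13, 1, 13, 11, 8, 11, 1, 6, 5, 12] = cl [lX, lX, lX, ly, lX, lX, ly]" using coef[OF conj_rev[of "[lX, ly, lx, lx, ly, lX]" "[13, 1, 13, 11, 8, 11, 1, 6, 5, 12]" "[lx, lx, lx, ly]"], of "[lX, lX, lX, ly, lX, lX, ly]"] P18 by (simp add: tsimps)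
  have P16: "ttw [9, 3, 9, 10, 1, 12, 5, 13, 1, 13] = cl [lX, lX, lX, ly, lX, lX, ly]" using rot_rev[of "[lX, lX, lX, ly, lX, lX, ly]" "[9, 3, 9, 10, 1, 12, 5, 13, 1, 13]" 7] P17 by (simp add: tsimps)
  have P15: "ttw [9, 3, 10, 1, 12, 5, 13, 1, 13] = cl [lx, ly, lX, lX, ly, lx]" using coef[OF subst_rev[of "[9, 3]" "[9, 3, 9]" "[lx, ly, lx, lx, lx, ly, lx, lx]" "[10, 1, 12, 5, 13, 1, 13]" "[lX, lX, lX, ly, lX, lX, ly]"], of "[lx, ly, lX, lX, ly, lx]"] LI3 P16 by (simp add: tsimps)
  have P14: "ttw [1, 2, 1, 9, 3, 10, 1, 12, 5] = cl [lx, ly, lX, lX, ly, lx]" using rot_rev[of "[lx, ly, lX, lX, ly, lx]" "[1, 2, 1, 9, 3, 10, 1, 12, 5]" 3] P15 by (simp add: tsimps)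
  have P13: "ttw [6, 9, 6, 2, 5, 12, 6, 7, 14] = cl [lx, lx, lx, ly, lX, lX]" using coef[OF conj_rev[of "[lx, ly, lx, lx, ly, lX, lX]" "[6, 9, 6, 2, 5, 12, 6, 7, 14]" "[lx, ly, lX, lX, ly, lx]"], of "[lx, lx, lx, ly, lX, lX]"] P14 by (simp add: tsimps)
  have P12: "ttw [1, 9, 8, 4, 11, 9, 7, 14, 6] = cl [lx, lx, lx, ly, lX, lX]" using rot_rev[of "[lx, lx, lx, ly, lX, lX]" "[1, 9, 8, 4, 11, 9, 7, 14, 6]" 8] P13 by (simp add: tsimps)
  have P11: "ttw [1, 2, 4, 11, 9, 7, 14, 6] = cl [lx, ly, lX, lX, ly, lx, lx, ly, lX]" using coef[OF subst_rev[of "[1, 2]" "[8, 9, 1]" "[lx, ly, lX, lX, lX, ly, lx, lx]" "[4, 11, 9, 7, 14, 6]" "[lx, lx, lx, ly, lX, lX]"], of "[lx, ly, lX, lX, ly, lx, lx, ly, lX]"] LI2 P12 by (simp add: tsimps)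
  note P10 = P11
  have P9: "ttw [10, 1, 9, 2, 8, 5, 12, 11] = cl [lX, lX, lX, ly, lX, lX, lX, ly]" using coef[OF conj_rev[of "[lx, lx, ly]" "[10, 1, 9, 2, 8, 5, 12, 11]" "[lx, ly, lX, lX, ly, lx, lx, ly, lX]"], of "[lX, lX, lX, ly, lX, lX, lX, ly]"] P10 by (simp add: tsimps)
  have P8: "ttw [1, 2, 9, 8, 7, 14, 3, 10] = cl [lX, lX, lX, ly, lX, lX, lX, ly]" using rot_rev[of "[lX, lX, lX, ly, lX, lX, lX, ly]" "[1, 2, 9, 8, 7, 14, 3, 10]" 7] P9 by (simp add: tsimps)
  have P7: "ttw [1, 2, 1, 9, 8, 7, 14, 3, 10] = cl [lX, lX, ly, lx, lx, lx, ly, lX]" using coef[OF subst_rev[of "[1, 2, 1]" "[2, 1]" "[lx, ly, lX]" "[9, 8, 7, 14, 3, 10]" "[lX, lX, lX, ly, lX, lX, lX, ly]"], of "[lX, lX, ly, lx, lx, lx, ly, lX]"] LI1 P8 by (simp add: tsimps)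
  note P6 = P7
  have P5: "ttw [8, 12, 8, 5, 1, 6, 13, 10, 3] = cl [lX, lX, ly, lX]" using coef[OF conj_rev[of "[lx, lx, lx, ly, lX, lX, lX]" "[8, 12, 8, 5, 1, 6, 13, 10, 3]" "[lX, lX, ly, lx, lx, lx, ly, lX]"], of "[lX, lX, ly, lX]"] P6 by (simp add: tsimps)
  have P4: "ttw [1, 12, 8, 5, 2, 9, 6, 13, 8] = cl [lX, lX, ly, lX]" using rot_rev[of "[lX, lX, ly, lX]" "[1, 12, 8, 5, 2, 9, 6, 13, 8]" 8] P5 by (simp add: tsimps)
  have P3: "ttw [1, 2, 9, 6, 13, 8] = cl []" using coef[OF subst_rev[of "[1]" "[5, 8, 12, 1]" "[lx, ly, lx, lx]" "[2, 9, 6, 13, 8]" "[lX, lX, ly, lX]"], of "[]"] LI0 P4 by (simp add: tsimps)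
  note P2 = P3
  have P1: "ttw [8, 5, 12, 14, 7, 1] = cl []" using coef[OF conj_rev[of "[lx, lx, ly, lx, lx, lx, ly]" "[8, 5, 12, 14, 7, 1]" "[]"], of "[]"] P2 by (simp add: tsimps)
  have P0: "ttw [1, 8, 5, 12, 14, 7] = cl []" using rot_rev[of "[]" "[1, 8, 5, 12, 14, 7]" 1] P1 by (simp add: tsimps)
  show ?thesis by (rule P0)
qed



definition Sb :: "nat \<Rightarrow> gr" where "Sb p = tt p + tt (p + 7)"

lemma tt_tt2: "tt p + (tt p + x) = x"
  by (simp add: add.assoc[symmetric] tt_tt)

lemma comm_from: "ttw [a, b, a, b] = 0 \<Longrightarrow> tt a + tt b = tt b + tt a"
proof -
  assume h: "ttw [a, b, a, b] = 0"
  have "tt a + tt b + (tt a + tt b) = 0" using h by (simp add: ttw.simps add.assoc)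
  then have "tt a + tt b = - (tt a + tt b)" by (simp add: add_eq_0_iff2)
  also have "\<dots> = - tt b + - tt a" by (rule minus_add)
  also have "\<dots> = tt b + tt a" by (simp add: tt_inv)
  finally show ?thesis .
qed

lemma line_gen: "ttw [p1, q1, p2, q2, q3, p3] = 0 \<Longrightarrow> tt p1 + tt q1 = Sb a \<Longrightarrow> tt p2 + tt q2 = Sb b \<Longrightarrow>
   tt q3 + tt p3 = Sb c \<Longrightarrow> tt p3 + tt q3 = Sb c \<Longrightarrow> Sb a + Sb b = Sb c"
proof -
  assume h: "ttw [p1, q1, p2, q2, q3, p3] = 0" and e1: "tt p1 + tt q1 = Sb a" and e2: "tt p2 + tt q2 = Sb b"
    and e3: "tt q3 + tt p3 = Sb c" and e4: "tt p3 + tt q3 = Sb c"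
  have "(tt p1 + tt q1) + (tt p2 + tt q2) + (tt q3 + tt p3) = 0" using h by (simp add: ttw.simps add.assoc)
  then have s: "Sb a + Sb b + Sb c = 0" by (simp only: e1 e2 e3)
  have "Sb c + Sb c = (tt q3 + tt p3) + (tt p3 + tt q3)" by (simp only: e3 e4)
  also have "\<dots> = 0" by (simp add: add.assoc tt_tt2 tt_tt)
  finally have "Sb c + Sb c = 0" .
  then have m: "- Sb c = Sb c" by (simp add: add_eq_0_iff2)
  have "Sb a + Sb b = - Sb c" using s by (simp add: add_eq_0_iff2)
  then show ?thesis using m by simp
qed

definition third :: "nat \<Rightarrow> nat \<Rightarrow> nat" where
  "third a b = ([[0, 0, 0, 0, 0, 0, 0, 0], [0, 0, 6, 4, 3, 7, 2, 5], [0, 6, 0, 7, 5, 4, 1, 3], [0, 4, 7, 0, 1, 6, 5, 2], [0, 3, 5, 1, 0, 2, 7, 6], [0, 7, 4, 6, 2, 0, 3, 1], [0, 2, 1, 5, 7, 3, 0, 4], [0, 5, 3, 2, 6, 1, 4, 0]] ! a ! b)"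

lemma comm_1: "tt 1 + tt 8 = tt 8 + tt 1"
proof -
  have e: "ttw [1, 8, 1, 8] = cl (winv [lx] @ [] @ [lx])" using conj_fwd[OF BC, of "[lx]"] by (simp add: tsimps)
  have z: "cl (winv [lx] @ [] @ [lx]) = 0" by (simp only: cl_append cl_winv cl_Nil) simp
  have "ttw [1, 8, 1, 8] = 0" using e z by (rule trans)
  then have "tt 1 + tt 8 = tt 8 + tt 1" by (rule comm_from)
  then show ?thesis .
qed

lemma comm_2: "tt 2 + tt 9 = tt 9 + tt 2"
proof -
  have e: "ttw [2, 9, 2, 9] = cl (winv [lx, lx] @ [] @ [lx, lx])" using conj_fwd[OF BC, of "[lx, lx]"] by (simp add: tsimps)
  have z: "cl (winv [lx, lx] @ [] @ [lx, lx]) = 0" by (simp only: cl_append cl_winv cl_Nil) simp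
  have "ttw [2, 9, 2, 9] = 0" using e z by (rule trans)
  then have "tt 2 + tt 9 = tt 9 + tt 2" by (rule comm_from)
  then show ?thesis .
qed

lemma comm_3: "tt 3 + tt 10 = tt 10 + tt 3"
proof -
  have e: "ttw [3, 10, 3, 10] = cl (winv [lx, lx, lx] @ [] @ [lx, lx, lx])" using conj_fwd[OF BC, of "[lx, lx, lx]"] by (simp add: tsimps)
  have z: "cl (winv [lx, lx, lx] @ [] @ [lx, lx, lx]) = 0" by (simp only: cl_append cl_winv cl_Nil) simp
  have "ttw [3, 10, 3, 10] = 0" using e z by (rule trans)
  then have "tt 3 + tt 10 = tt 10 + tt 3" by (rule comm_from)
  then show ?thesis .
qed

lemma comm_4: "tt 4 + tt 11 = tt 11 + tt 4"
proof -
  have e: "ttw [11, 4, 11, 4] = cl (winv [lx, ly, lX] @ [] @ [lx, ly, lX])" using conj_fwd[OF BC, of "[lx, ly, lX]"] by (simp add: tsimps)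
  have z: "cl (winv [lx, ly, lX] @ [] @ [lx, ly, lX]) = 0" by (simp only: cl_append cl_winv cl_Nil) simp
  have "ttw [11, 4, 11, 4] = 0" using e z by (rule trans)
  then have "tt 11 + tt 4 = tt 4 + tt 11" by (rule comm_from)
  then show ?thesis by (rule sym)
qed

lemma comm_5: "tt 5 + tt 12 = tt 12 + tt 5"
proof -
  have e: "ttw [12, 5, 12, 5] = cl (winv [lx, ly] @ [] @ [lx, ly])" using conj_fwd[OF BC, of "[lx, ly]"] by (simp add: tsimps)
  have z: "cl (winv [lx, ly] @ [] @ [lx, ly]) = 0" by (simp only: cl_append cl_winv cl_Nil) simp
  have "ttw [12, 5, 12, 5] = 0" using e z by (rule trans)
  then have "tt 12 + tt 5 = tt 5 + tt 12" by (rule comm_from)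
  then show ?thesis by (rule sym)
qed

lemma comm_6: "tt 6 + tt 13 = tt 13 + tt 6"
proof -
  have e: "ttw [6, 13, 6, 13] = cl (winv [lX] @ [] @ [lX])" using conj_fwd[OF BC, of "[lX]"] by (simp add: tsimps)
  have z: "cl (winv [lX] @ [] @ [lX]) = 0" by (simp only: cl_append cl_winv cl_Nil) simp
  have "ttw [6, 13, 6, 13] = 0" using e z by (rule trans)
  then have "tt 6 + tt 13 = tt 13 + tt 6" by (rule comm_from)
  then show ?thesis .
qed

lemma comm_7: "tt 7 + tt 14 = tt 14 + tt 7"
proof -
  have e: "ttw [7, 14, 7, 14] = cl (winv [] @ [] @ [])" using conj_fwd[OF BC, of "[]"] by (simp add: tsimps)
  have z: "cl (winv [] @ [] @ []) = 0" by (simp only: cl_append cl_winv cl_Nil) simp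
  have "ttw [7, 14, 7, 14] = 0" using e z by (rule trans)
  then have "tt 7 + tt 14 = tt 14 + tt 7" by (rule comm_from)
  then show ?thesis .
qed

lemma Sbp:
  "tt 1 + tt 8 = Sb 1" "tt 8 + tt 1 = Sb 1"
  "tt 2 + tt 9 = Sb 2" "tt 9 + tt 2 = Sb 2"
  "tt 3 + tt 10 = Sb 3" "tt 10 + tt 3 = Sb 3"
  "tt 4 + tt 11 = Sb 4" "tt 11 + tt 4 = Sb 4"
  "tt 5 + tt 12 = Sb 5" "tt 12 + tt 5 = Sb 5"
  "tt 6 + tt 13 = Sb 6" "tt 13 + tt 6 = Sb 6"
  "tt 7 + tt 14 = Sb 7" "tt 14 + tt 7 = Sb 7"
  by (simp_all add: Sb_def comm_1 comm_2 comm_3 comm_4 comm_5 comm_6 comm_7)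

lemma line_1_2: "Sb 1 + Sb 2 = Sb 6"
proof -
  have e: "ttw [8, 1, 9, 2, 13, 6] = cl (winv [lx, lx, lx, ly, lX, lX, lX] @ [] @ [lx, lx, lx, ly, lX, lX, lX])" using conj_fwd[OF L0, of "[lx, lx, lx, ly, lX, lX, lX]"] by (simp add: tsimps)
  have z: "cl (winv [lx, lx, lx, ly, lX, lX, lX] @ [] @ [lx, lx, lx, ly, lX, lX, lX]) = 0" by (simp only: cl_append cl_winv cl_Nil) simp
  have "ttw [8, 1, 9, 2, 13, 6] = 0" using e z by (rule trans)
  then show ?thesis by (rule line_gen) (simp_all only: Sbp)
qed

lemma line_1_3: "Sb 1 + Sb 3 = Sb 4"
proof -
  have e: "ttw [8, 1, 3, 10, 4, 11] = cl (winv [lX, lX, lX, ly] @ [] @ [lX, lX, lX, ly])" using conj_fwd[OF L0, of "[lX, lX, lX, ly]"] by (simp add: tsimps)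
  have z: "cl (winv [lX, lX, lX, ly] @ [] @ [lX, lX, lX, ly]) = 0" by (simp only: cl_append cl_winv cl_Nil) simp
  have "ttw [8, 1, 3, 10, 4, 11] = 0" using e z by (rule trans)
  then show ?thesis by (rule line_gen) (simp_all only: Sbp)
qed

lemma line_1_4: "Sb 1 + Sb 4 = Sb 3"
proof -
  have e: "ttw [1, 8, 11, 4, 3, 10] = cl (winv [lx, ly, lX, lX] @ [] @ [lx, ly, lX, lX])" using conj_fwd[OF L0, of "[lx, ly, lX, lX]"] by (simp add: tsimps)
  have z: "cl (winv [lx, ly, lX, lX] @ [] @ [lx, ly, lX, lX]) = 0" by (simp only: cl_append cl_winv cl_Nil) simp
  have "ttw [1, 8, 11, 4, 3, 10] = 0" using e z by (rule trans)
  then show ?thesis by (rule line_gen) (simp_all only: Sbp)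
qed

lemma line_1_5: "Sb 1 + Sb 5 = Sb 7"
proof -
  have e: "ttw [1, 8, 5, 12, 14, 7] = cl (winv [] @ [] @ [])" using conj_fwd[OF L0, of "[]"] by (simp add: tsimps)
  have z: "cl (winv [] @ [] @ []) = 0" by (simp only: cl_append cl_winv cl_Nil) simp
  have "ttw [1, 8, 5, 12, 14, 7] = 0" using e z by (rule trans)
  then show ?thesis by (rule line_gen) (simp_all only: Sbp)
qed

lemma line_1_6: "Sb 1 + Sb 6 = Sb 2"
proof -
  have e: "ttw [1, 8, 6, 13, 9, 2] = cl (winv [lx, lx, ly, lX] @ [] @ [lx, lx, ly, lX])" using conj_fwd[OF L0, of "[lx, lx, ly, lX]"] by (simp add: tsimps)
  have z: "cl (winv [lx, lx, ly, lX] @ [] @ [lx, lx, ly, lX]) = 0" by (simp only: cl_append cl_winv cl_Nil) simp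
  have "ttw [1, 8, 6, 13, 9, 2] = 0" using e z by (rule trans)
  then show ?thesis by (rule line_gen) (simp_all only: Sbp)
qed

lemma line_1_7: "Sb 1 + Sb 7 = Sb 5"
proof -
  have e: "ttw [1, 8, 14, 7, 5, 12] = cl (winv [ly, lx, lx, ly, lX, lX, ly] @ [] @ [ly, lx, lx, ly, lX, lX, ly])" using conj_fwd[OF L0, of "[ly, lx, lx, ly, lX, lX, ly]"] by (simp add: tsimps)
  have z: "cl (winv [ly, lx, lx, ly, lX, lX, ly] @ [] @ [ly, lx, lx, ly, lX, lX, ly]) = 0" by (simp only: cl_append cl_winv cl_Nil) simp
  have "ttw [1, 8, 14, 7, 5, 12] = 0" using e z by (rule trans)
  then show ?thesis by (rule line_gen) (simp_all only: Sbp)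
qed

lemma line_2_1: "Sb 2 + Sb 1 = Sb 6"
proof -
  have e: "ttw [9, 2, 8, 1, 13, 6] = cl (winv [lX, lX, lX, ly, lx, lx, ly] @ [] @ [lX, lX, lX, ly, lx, lx, ly])" using conj_fwd[OF L0, of "[lX, lX, lX, ly, lx, lx, ly]"] by (simp add: tsimps)
  have z: "cl (winv [lX, lX, lX, ly, lx, lx, ly] @ [] @ [lX, lX, lX, ly, lx, lx, ly]) = 0" by (simp only: cl_append cl_winv cl_Nil) simp
  have "ttw [9, 2, 8, 1, 13, 6] = 0" using e z by (rule trans)
  then show ?thesis by (rule line_gen) (simp_all only: Sbp)
qed

lemma line_2_3: "Sb 2 + Sb 3 = Sb 7"
proof -
  have e: "ttw [9, 2, 10, 3, 14, 7] = cl (winv [lx, lx, lx, ly, lX, lX] @ [] @ [lx, lx, lx, ly, lX, lX])" using conj_fwd[OF L0, of "[lx, lx, lx, ly, lX, lX]"] by (simp add: tsimps)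
  have z: "cl (winv [lx, lx, lx, ly, lX, lX] @ [] @ [lx, lx, lx, ly, lX, lX]) = 0" by (simp only: cl_append cl_winv cl_Nil) simp
  have "ttw [9, 2, 10, 3, 14, 7] = 0" using e z by (rule trans)
  then show ?thesis by (rule line_gen) (simp_all only: Sbp)
qed

lemma line_2_4: "Sb 2 + Sb 4 = Sb 5"
proof -
  have e: "ttw [9, 2, 4, 11, 5, 12] = cl (winv [lX, lX, lX, ly, lx] @ [] @ [lX, lX, lX, ly, lx])" using conj_fwd[OF L0, of "[lX, lX, lX, ly, lx]"] by (simp add: tsimps)
  have z: "cl (winv [lX, lX, lX, ly, lx] @ [] @ [lX, lX, lX, ly, lx]) = 0" by (simp only: cl_append cl_winv cl_Nil) simp
  have "ttw [9, 2, 4, 11, 5, 12] = 0" using e z by (rule trans)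
  then show ?thesis by (rule line_gen) (simp_all only: Sbp)
qed

lemma line_2_5: "Sb 2 + Sb 5 = Sb 4"
proof -
  have e: "ttw [2, 9, 12, 5, 4, 11] = cl (winv [lx, ly, lX] @ [] @ [lx, ly, lX])" using conj_fwd[OF L0, of "[lx, ly, lX]"] by (simp add: tsimps)
  have z: "cl (winv [lx, ly, lX] @ [] @ [lx, ly, lX]) = 0" by (simp only: cl_append cl_winv cl_Nil) simp
  have "ttw [2, 9, 12, 5, 4, 11] = 0" using e z by (rule trans)
  then show ?thesis by (rule line_gen) (simp_all only: Sbp)
qed

lemma line_2_6: "Sb 2 + Sb 6 = Sb 1"
proof -
  have e: "ttw [2, 9, 6, 13, 8, 1] = cl (winv [lx] @ [] @ [lx])" using conj_fwd[OF L0, of "[lx]"] by (simp add: tsimps)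
  have z: "cl (winv [lx] @ [] @ [lx]) = 0" by (simp only: cl_append cl_winv cl_Nil) simp
  have "ttw [2, 9, 6, 13, 8, 1] = 0" using e z by (rule trans)
  then show ?thesis by (rule line_gen) (simp_all only: Sbp)
qed

lemma line_2_7: "Sb 2 + Sb 7 = Sb 3"
proof -
  have e: "ttw [2, 9, 7, 14, 10, 3] = cl (winv [lx, lx, ly] @ [] @ [lx, lx, ly])" using conj_fwd[OF L0, of "[lx, lx, ly]"] by (simp add: tsimps)
  have z: "cl (winv [lx, lx, ly] @ [] @ [lx, lx, ly]) = 0" by (simp only: cl_append cl_winv cl_Nil) simp
  have "ttw [2, 9, 7, 14, 10, 3] = 0" using e z by (rule trans)
  then show ?thesis by (rule line_gen) (simp_all only: Sbp)
qed

lemma line_3_1: "Sb 3 + Sb 1 = Sb 4"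
proof -
  have e: "ttw [3, 10, 1, 8, 11, 4] = cl (winv [lx, lx, ly, lx] @ [] @ [lx, lx, ly, lx])" using conj_fwd[OF L0, of "[lx, lx, ly, lx]"] by (simp add: tsimps)
  have z: "cl (winv [lx, lx, ly, lx] @ [] @ [lx, lx, ly, lx]) = 0" by (simp only: cl_append cl_winv cl_Nil) simp
  have "ttw [3, 10, 1, 8, 11, 4] = 0" using e z by (rule trans)
  then show ?thesis by (rule line_gen) (simp_all only: Sbp)
qed

lemma line_3_2: "Sb 3 + Sb 2 = Sb 7"
proof -
  have e: "ttw [10, 3, 9, 2, 14, 7] = cl (winv [lx, lx, lx, ly, lX, lX, ly] @ [] @ [lx, lx, lx, ly, lX, lX, ly])" using conj_fwd[OF L0, of "[lx, lx, lx, ly, lX, lX, ly]"] by (simp add: tsimps)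
  have z: "cl (winv [lx, lx, lx, ly, lX, lX, ly] @ [] @ [lx, lx, lx, ly, lX, lX, ly]) = 0" by (simp only: cl_append cl_winv cl_Nil) simp
  have "ttw [10, 3, 9, 2, 14, 7] = 0" using e z by (rule trans)
  then show ?thesis by (rule line_gen) (simp_all only: Sbp)
qed

lemma line_3_4: "Sb 3 + Sb 4 = Sb 1"
proof -
  have e: "ttw [10, 3, 11, 4, 8, 1] = cl (winv [lx, lx, lx, ly, lX] @ [] @ [lx, lx, lx, ly, lX])" using conj_fwd[OF L0, of "[lx, lx, lx, ly, lX]"] by (simp add: tsimps)
  have z: "cl (winv [lx, lx, lx, ly, lX] @ [] @ [lx, lx, lx, ly, lX]) = 0" by (simp only: cl_append cl_winv cl_Nil) simp
  have "ttw [10, 3, 11, 4, 8, 1] = 0" using e z by (rule trans)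
  then show ?thesis by (rule line_gen) (simp_all only: Sbp)
qed

lemma line_3_5: "Sb 3 + Sb 5 = Sb 6"
proof -
  have e: "ttw [10, 3, 5, 12, 6, 13] = cl (winv [lX, lX, lX, ly, lx, lx] @ [] @ [lX, lX, lX, ly, lx, lx])" using conj_fwd[OF L0, of "[lX, lX, lX, ly, lx, lx]"] by (simp add: tsimps)
  have z: "cl (winv [lX, lX, lX, ly, lx, lx] @ [] @ [lX, lX, lX, ly, lx, lx]) = 0" by (simp only: cl_append cl_winv cl_Nil) simp
  have "ttw [10, 3, 5, 12, 6, 13] = 0" using e z by (rule trans)
  then show ?thesis by (rule line_gen) (simp_all only: Sbp)
qed

lemma line_3_6: "Sb 3 + Sb 6 = Sb 5"
proof -
  have e: "ttw [3, 10, 13, 6, 5, 12] = cl (winv [lx, ly] @ [] @ [lx, ly])" using conj_fwd[OF L0, of "[lx, ly]"] by (simp add: tsimps)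
  have z: "cl (winv [lx, ly] @ [] @ [lx, ly]) = 0" by (simp only: cl_append cl_winv cl_Nil) simp
  have "ttw [3, 10, 13, 6, 5, 12] = 0" using e z by (rule trans)
  then show ?thesis by (rule line_gen) (simp_all only: Sbp)
qed

lemma line_3_7: "Sb 3 + Sb 7 = Sb 2"
proof -
  have e: "ttw [3, 10, 7, 14, 9, 2] = cl (winv [lx, lx] @ [] @ [lx, lx])" using conj_fwd[OF L0, of "[lx, lx]"] by (simp add: tsimps)
  have z: "cl (winv [lx, lx] @ [] @ [lx, lx]) = 0" by (simp only: cl_append cl_winv cl_Nil) simp
  have "ttw [3, 10, 7, 14, 9, 2] = 0" using e z by (rule trans)
  then show ?thesis by (rule line_gen) (simp_all only: Sbp)
qed

lemma line_4_1: "Sb 4 + Sb 1 = Sb 3"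
proof -
  have e: "ttw [4, 11, 1, 8, 10, 3] = cl (winv [lx, lx, lx] @ [] @ [lx, lx, lx])" using conj_fwd[OF L0, of "[lx, lx, lx]"] by (simp add: tsimps)
  have z: "cl (winv [lx, lx, lx] @ [] @ [lx, lx, lx]) = 0" by (simp only: cl_append cl_winv cl_Nil) simp
  have "ttw [4, 11, 1, 8, 10, 3] = 0" using e z by (rule trans)
  then show ?thesis by (rule line_gen) (simp_all only: Sbp)
qed

lemma line_4_2: "Sb 4 + Sb 2 = Sb 5"
proof -
  have e: "ttw [4, 11, 2, 9, 12, 5] = cl (winv [lx, lx, ly, lx, lx] @ [] @ [lx, lx, ly, lx, lx])" using conj_fwd[OF L0, of "[lx, lx, ly, lx, lx]"] by (simp add: tsimps)
  have z: "cl (winv [lx, lx, ly, lx, lx] @ [] @ [lx, lx, ly, lx, lx]) = 0" by (simp only: cl_append cl_winv cl_Nil) simp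
  have "ttw [4, 11, 2, 9, 12, 5] = 0" using e z by (rule trans)
  then show ?thesis by (rule line_gen) (simp_all only: Sbp)
qed

lemma line_4_3: "Sb 4 + Sb 3 = Sb 1"
proof -
  have e: "ttw [11, 4, 3, 10, 1, 8] = cl (winv [lx, lx, ly, lx, lx, ly] @ [] @ [lx, lx, ly, lx, lx, ly])" using conj_fwd[OF L0, of "[lx, lx, ly, lx, lx, ly]"] by (simp add: tsimps)
  have z: "cl (winv [lx, lx, ly, lx, lx, ly] @ [] @ [lx, lx, ly, lx, lx, ly]) = 0" by (simp only: cl_append cl_winv cl_Nil) simp
  have "ttw [11, 4, 3, 10, 1, 8] = 0" using e z by (rule trans)
  then show ?thesis by (rule line_gen) (simp_all only: Sbp)
qed

lemma line_4_5: "Sb 4 + Sb 5 = Sb 2"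
proof -
  have e: "ttw [11, 4, 12, 5, 9, 2] = cl (winv [lx, lx, lx, ly] @ [] @ [lx, lx, lx, ly])" using conj_fwd[OF L0, of "[lx, lx, lx, ly]"] by (simp add: tsimps)
  have z: "cl (winv [lx, lx, lx, ly] @ [] @ [lx, lx, lx, ly]) = 0" by (simp only: cl_append cl_winv cl_Nil) simp
  have "ttw [11, 4, 12, 5, 9, 2] = 0" using e z by (rule trans)
  then show ?thesis by (rule line_gen) (simp_all only: Sbp)
qed

lemma line_4_6: "Sb 4 + Sb 6 = Sb 7"
proof -
  have e: "ttw [11, 4, 6, 13, 7, 14] = cl (winv [lX, lX, lX, ly, lx, lx, lx] @ [] @ [lX, lX, lX, ly, lx, lx, lx])" using conj_fwd[OF L0, of "[lX, lX, lX, ly, lx, lx, lx]"] by (simp add: tsimps)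
  have z: "cl (winv [lX, lX, lX, ly, lx, lx, lx] @ [] @ [lX, lX, lX, ly, lx, lx, lx]) = 0" by (simp only: cl_append cl_winv cl_Nil) simp
  have "ttw [11, 4, 6, 13, 7, 14] = 0" using e z by (rule trans)
  then show ?thesis by (rule line_gen) (simp_all only: Sbp)
qed

lemma line_4_7: "Sb 4 + Sb 7 = Sb 6"
proof -
  have e: "ttw [11, 4, 14, 7, 13, 6] = cl (winv [ly, lX] @ [] @ [ly, lX])" using conj_fwd[OF L0, of "[ly, lX]"] by (simp add: tsimps)
  have z: "cl (winv [ly, lX] @ [] @ [ly, lX]) = 0" by (simp only: cl_append cl_winv cl_Nil) simp
  have "ttw [11, 4, 14, 7, 13, 6] = 0" using e z by (rule trans)
  then show ?thesis by (rule line_gen) (simp_all only: Sbp)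
qed

lemma line_5_1: "Sb 5 + Sb 1 = Sb 7"
proof -
  have e: "ttw [12, 5, 8, 1, 14, 7] = cl (winv [ly] @ [] @ [ly])" using conj_fwd[OF L0, of "[ly]"] by (simp add: tsimps)
  have z: "cl (winv [ly] @ [] @ [ly]) = 0" by (simp only: cl_append cl_winv cl_Nil) simp
  have "ttw [12, 5, 8, 1, 14, 7] = 0" using e z by (rule trans)
  then show ?thesis by (rule line_gen) (simp_all only: Sbp)
qed

lemma line_5_2: "Sb 5 + Sb 2 = Sb 4"
proof -
  have e: "ttw [5, 12, 2, 9, 11, 4] = cl (winv [lX, lX, lX] @ [] @ [lX, lX, lX])" using conj_fwd[OF L0, of "[lX, lX, lX]"] by (simp add: tsimps)
  have z: "cl (winv [lX, lX, lX] @ [] @ [lX, lX, lX]) = 0" by (simp only: cl_append cl_winv cl_Nil) simp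
  have "ttw [5, 12, 2, 9, 11, 4] = 0" using e z by (rule trans)
  then show ?thesis by (rule line_gen) (simp_all only: Sbp)
qed

lemma line_5_3: "Sb 5 + Sb 3 = Sb 6"
proof -
  have e: "ttw [5, 12, 3, 10, 13, 6] = cl (winv [lx, lx, ly, lx, lx, lx] @ [] @ [lx, lx, ly, lx, lx, lx])" using conj_fwd[OF L0, of "[lx, lx, ly, lx, lx, lx]"] by (simp add: tsimps)
  have z: "cl (winv [lx, lx, ly, lx, lx, lx] @ [] @ [lx, lx, ly, lx, lx, lx]) = 0" by (simp only: cl_append cl_winv cl_Nil) simp
  have "ttw [5, 12, 3, 10, 13, 6] = 0" using e z by (rule trans)
  then show ?thesis by (rule line_gen) (simp_all only: Sbp)
qed

lemma line_5_4: "Sb 5 + Sb 4 = Sb 2"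
proof -
  have e: "ttw [12, 5, 4, 11, 2, 9] = cl (winv [lx, ly, lX, lX, ly] @ [] @ [lx, ly, lX, lX, ly])" using conj_fwd[OF L0, of "[lx, ly, lX, lX, ly]"] by (simp add: tsimps)
  have z: "cl (winv [lx, ly, lX, lX, ly] @ [] @ [lx, ly, lX, lX, ly]) = 0" by (simp only: cl_append cl_winv cl_Nil) simp
  have "ttw [12, 5, 4, 11, 2, 9] = 0" using e z by (rule trans)
  then show ?thesis by (rule line_gen) (simp_all only: Sbp)
qed

lemma line_5_6: "Sb 5 + Sb 6 = Sb 3"
proof -
  have e: "ttw [12, 5, 13, 6, 10, 3] = cl (winv [lx, lx, lx, ly, lx] @ [] @ [lx, lx, lx, ly, lx])" using conj_fwd[OF L0, of "[lx, lx, lx, ly, lx]"] by (simp add: tsimps)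
  have z: "cl (winv [lx, lx, lx, ly, lx] @ [] @ [lx, lx, lx, ly, lx]) = 0" by (simp only: cl_append cl_winv cl_Nil) simp
  have "ttw [12, 5, 13, 6, 10, 3] = 0" using e z by (rule trans)
  then show ?thesis by (rule line_gen) (simp_all only: Sbp)
qed

lemma line_5_7: "Sb 5 + Sb 7 = Sb 1"
proof -
  have e: "ttw [12, 5, 14, 7, 8, 1] = cl (winv [ly, lx, lx, ly, lX, lX] @ [] @ [ly, lx, lx, ly, lX, lX])" using conj_fwd[OF L0, of "[ly, lx, lx, ly, lX, lX]"] by (simp add: tsimps)
  have z: "cl (winv [ly, lx, lx, ly, lX, lX] @ [] @ [ly, lx, lx, ly, lX, lX]) = 0" by (simp only: cl_append cl_winv cl_Nil) simp
  have "ttw [12, 5, 14, 7, 8, 1] = 0" using e z by (rule trans)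
  then show ?thesis by (rule line_gen) (simp_all only: Sbp)
qed

lemma line_6_1: "Sb 6 + Sb 1 = Sb 2"
proof -
  have e: "ttw [13, 6, 8, 1, 9, 2] = cl (winv [ly, lx, lx, ly, lX] @ [] @ [ly, lx, lx, ly, lX])" using conj_fwd[OF L0, of "[ly, lx, lx, ly, lX]"] by (simp add: tsimps)
  have z: "cl (winv [ly, lx, lx, ly, lX] @ [] @ [ly, lx, lx, ly, lX]) = 0" by (simp only: cl_append cl_winv cl_Nil) simp
  have "ttw [13, 6, 8, 1, 9, 2] = 0" using e z by (rule trans)
  then show ?thesis by (rule line_gen) (simp_all only: Sbp)
qed

lemma line_6_2: "Sb 6 + Sb 2 = Sb 1"
proof -
  have e: "ttw [13, 6, 9, 2, 8, 1] = cl (winv [ly, lx] @ [] @ [ly, lx])" using conj_fwd[OF L0, of "[ly, lx]"] by (simp add: tsimps)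
  have z: "cl (winv [ly, lx] @ [] @ [ly, lx]) = 0" by (simp only: cl_append cl_winv cl_Nil) simp
  have "ttw [13, 6, 9, 2, 8, 1] = 0" using e z by (rule trans)
  then show ?thesis by (rule line_gen) (simp_all only: Sbp)
qed

lemma line_6_3: "Sb 6 + Sb 3 = Sb 5"
proof -
  have e: "ttw [6, 13, 3, 10, 12, 5] = cl (winv [lX, lX] @ [] @ [lX, lX])" using conj_fwd[OF L0, of "[lX, lX]"] by (simp add: tsimps)
  have z: "cl (winv [lX, lX] @ [] @ [lX, lX]) = 0" by (simp only: cl_append cl_winv cl_Nil) simp
  have "ttw [6, 13, 3, 10, 12, 5] = 0" using e z by (rule trans)
  then show ?thesis by (rule line_gen) (simp_all only: Sbp)
qed

lemma line_6_4: "Sb 6 + Sb 4 = Sb 7"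
proof -
  have e: "ttw [6, 13, 4, 11, 14, 7] = cl (winv [lx, lx, ly, lX, lX, lX] @ [] @ [lx, lx, ly, lX, lX, lX])" using conj_fwd[OF L0, of "[lx, lx, ly, lX, lX, lX]"] by (simp add: tsimps)
  have z: "cl (winv [lx, lx, ly, lX, lX, lX] @ [] @ [lx, lx, ly, lX, lX, lX]) = 0" by (simp only: cl_append cl_winv cl_Nil) simp
  have "ttw [6, 13, 4, 11, 14, 7] = 0" using e z by (rule trans)
  then show ?thesis by (rule line_gen) (simp_all only: Sbp)
qed

lemma line_6_5: "Sb 6 + Sb 5 = Sb 3"
proof -
  have e: "ttw [13, 6, 5, 12, 3, 10] = cl (winv [lx, ly, lX, lX, ly, lx] @ [] @ [lx, ly, lX, lX, ly, lx])" using conj_fwd[OF L0, of "[lx, ly, lX, lX, ly, lx]"] by (simp add: tsimps)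
  have z: "cl (winv [lx, ly, lX, lX, ly, lx] @ [] @ [lx, ly, lX, lX, ly, lx]) = 0" by (simp only: cl_append cl_winv cl_Nil) simp
  have "ttw [13, 6, 5, 12, 3, 10] = 0" using e z by (rule trans)
  then show ?thesis by (rule line_gen) (simp_all only: Sbp)
qed

lemma line_6_7: "Sb 6 + Sb 7 = Sb 4"
proof -
  have e: "ttw [13, 6, 14, 7, 11, 4] = cl (winv [lx, lx, lx, ly, lx, lx] @ [] @ [lx, lx, lx, ly, lx, lx])" using conj_fwd[OF L0, of "[lx, lx, lx, ly, lx, lx]"] by (simp add: tsimps)
  have z: "cl (winv [lx, lx, lx, ly, lx, lx] @ [] @ [lx, lx, lx, ly, lx, lx]) = 0" by (simp only: cl_append cl_winv cl_Nil) simp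
  have "ttw [13, 6, 14, 7, 11, 4] = 0" using e z by (rule trans)
  then show ?thesis by (rule line_gen) (simp_all only: Sbp)
qed

lemma line_7_1: "Sb 7 + Sb 1 = Sb 5"
proof -
  have e: "ttw [7, 14, 8, 1, 5, 12] = cl (winv [lx, lx, ly, lX, lX, ly] @ [] @ [lx, lx, ly, lX, lX, ly])" using conj_fwd[OF L0, of "[lx, lx, ly, lX, lX, ly]"] by (simp add: tsimps)
  have z: "cl (winv [lx, lx, ly, lX, lX, ly] @ [] @ [lx, lx, ly, lX, lX, ly]) = 0" by (simp only: cl_append cl_winv cl_Nil) simp
  have "ttw [7, 14, 8, 1, 5, 12] = 0" using e z by (rule trans)
  then show ?thesis by (rule line_gen) (simp_all only: Sbp)
qed

lemma line_7_2: "Sb 7 + Sb 2 = Sb 3"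
proof -
  have e: "ttw [14, 7, 9, 2, 10, 3] = cl (winv [ly, lx, lx, ly] @ [] @ [ly, lx, lx, ly])" using conj_fwd[OF L0, of "[ly, lx, lx, ly]"] by (simp add: tsimps)
  have z: "cl (winv [ly, lx, lx, ly] @ [] @ [ly, lx, lx, ly]) = 0" by (simp only: cl_append cl_winv cl_Nil) simp
  have "ttw [14, 7, 9, 2, 10, 3] = 0" using e z by (rule trans)
  then show ?thesis by (rule line_gen) (simp_all only: Sbp)
qed

lemma line_7_3: "Sb 7 + Sb 3 = Sb 2"
proof -
  have e: "ttw [14, 7, 10, 3, 9, 2] = cl (winv [ly, lx, lx] @ [] @ [ly, lx, lx])" using conj_fwd[OF L0, of "[ly, lx, lx]"] by (simp add: tsimps)
  have z: "cl (winv [ly, lx, lx] @ [] @ [ly, lx, lx]) = 0" by (simp only: cl_append cl_winv cl_Nil) simp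
  have "ttw [14, 7, 10, 3, 9, 2] = 0" using e z by (rule trans)
  then show ?thesis by (rule line_gen) (simp_all only: Sbp)
qed

lemma line_7_4: "Sb 7 + Sb 4 = Sb 6"
proof -
  have e: "ttw [7, 14, 4, 11, 13, 6] = cl (winv [lX] @ [] @ [lX])" using conj_fwd[OF L0, of "[lX]"] by (simp add: tsimps)
  have z: "cl (winv [lX] @ [] @ [lX]) = 0" by (simp only: cl_append cl_winv cl_Nil) simp
  have "ttw [7, 14, 4, 11, 13, 6] = 0" using e z by (rule trans)
  then show ?thesis by (rule line_gen) (simp_all only: Sbp)
qed

lemma line_7_5: "Sb 7 + Sb 5 = Sb 1"
proof -
  have e: "ttw [7, 14, 5, 12, 8, 1] = cl (winv [lx, lx, ly, lX, lX] @ [] @ [lx, lx, ly, lX, lX])" using conj_fwd[OF L0, of "[lx, lx, ly, lX, lX]"] by (simp add: tsimps)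
  have z: "cl (winv [lx, lx, ly, lX, lX] @ [] @ [lx, lx, ly, lX, lX]) = 0" by (simp only: cl_append cl_winv cl_Nil) simp
  have "ttw [7, 14, 5, 12, 8, 1] = 0" using e z by (rule trans)
  then show ?thesis by (rule line_gen) (simp_all only: Sbp)
qed

lemma line_7_6: "Sb 7 + Sb 6 = Sb 4"
proof -
  have e: "ttw [14, 7, 6, 13, 4, 11] = cl (winv [lx, ly, lX, lX, ly, lx, lx] @ [] @ [lx, ly, lX, lX, ly, lx, lx])" using conj_fwd[OF L0, of "[lx, ly, lX, lX, ly, lx, lx]"] by (simp add: tsimps)
  have z: "cl (winv [lx, ly, lX, lX, ly, lx, lx] @ [] @ [lx, ly, lX, lX, ly, lx, lx]) = 0" by (simp only: cl_append cl_winv cl_Nil) simp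
  have "ttw [14, 7, 6, 13, 4, 11] = 0" using e z by (rule trans)
  then show ?thesis by (rule line_gen) (simp_all only: Sbp)
qed

lemma range7: "p \<in> {1..7::nat} \<Longrightarrow> p = 1 \<or> p = 2 \<or> p = 3 \<or> p = 4 \<or> p = 5 \<or> p = 6 \<or> p = 7"
  unfolding atLeastAtMost_iff by presburger

lemma nth_one: "(x # xs) ! 1 = xs ! 0"
  by (simp add: One_nat_def)

lemma Line: "a \<in> {1..7} \<Longrightarrow> b \<in> {1..7} \<Longrightarrow> a \<noteq> b \<Longrightarrow> Sb a + Sb b = Sb (third a b)"
proof -
  assume a: "a \<in> {1..7}" and b: "b \<in> {1..7}" and ab: "a \<noteq> b"
  from range7[OF a] range7[OF b] ab show ?thesis
    by (elim disjE) (simp_all add: third_def nth_one line_1_2 line_1_3 line_1_4 line_1_5 line_1_6 line_1_7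
      line_2_1 line_2_3 line_2_4 line_2_5 line_2_6 line_2_7 line_3_1 line_3_2 line_3_4 line_3_5 line_3_6 line_3_7
      line_4_1 line_4_2 line_4_3 line_4_5 line_4_6 line_4_7 line_5_1 line_5_2 line_5_3 line_5_4 line_5_6 line_5_7
      line_6_1 line_6_2 line_6_3 line_6_4 line_6_5 line_6_7 line_7_1 line_7_2 line_7_3 line_7_4 line_7_5 line_7_6)
qed

lemma col_char: "a \<in> {1..7} \<Longrightarrow> b \<in> {1..7} \<Longrightarrow> c \<in> {1..7} \<Longrightarrow>
  collinear a b c \<longleftrightarrow> (a = b \<or> a = c \<or> b = c \<or> c = third a b)"
proof -
  assume a: "a \<in> {1..7}" and b: "b \<in> {1..7}" and c: "c \<in> {1..7}"
  from range7[OF a] range7[OF b] range7[OF c] show ?thesis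
    by (elim disjE) (simp_all add: collinear_def fano_lines_def third_def nth_one)
qed

lemma frame: "i \<in> {1..7} \<Longrightarrow> j \<in> {1..7} \<Longrightarrow> k \<in> {1..7} \<Longrightarrow> l \<in> {1..7} \<Longrightarrow>
  distinct [i, j, k, l] \<Longrightarrow> third i j \<noteq> k \<Longrightarrow> third i j \<noteq> l \<Longrightarrow> third i k \<noteq> l \<Longrightarrow> third j k \<noteq> l \<Longrightarrow>
  third i j = third k l"
proof -
  assume i: "i \<in> {1..7}" and j: "j \<in> {1..7}" and k: "k \<in> {1..7}" and l: "l \<in> {1..7}"
  assume h: "distinct [i, j, k, l]" "third i j \<noteq> k" "third i j \<noteq> l" "third i k \<noteq> l" "third j k \<noteq> l"
  from range7[OF i] range7[OF j] range7[OF k] range7[OF l] h show ?thesis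
    by (elim disjE) (simp_all add: third_def nth_one)
qed

lemma is_t_cl: "is_t i w \<Longrightarrow> cl w = tt i"
proof -
  assume "is_t i w"
  then obtain g where g: "in_N g" "act g 7 = i" "w = wconj wt g" unfolding is_t_def by blast
  then show ?thesis using lemmaT[OF g(1)] by simp
qed

theorem lemma3p3:
  fixes i j k l :: nat
    and wi ui wj uj wk uk wl ul :: word
  assumes "i \<in> {1..7}" "j \<in> {1..7}" "k \<in> {1..7}" "l \<in> {1..7}"
    and "distinct [i, j, k, l]"
    and "\<not> collinear i j k" "\<not> collinear i j l" "\<not> collinear i k l" "\<not> collinear j k l"
    and "is_t i wi" "is_t (i + 7) ui" "is_t j wj" "is_t (j + 7) uj"
    and "is_t k wk" "is_t (k + 7) uk" "is_t l wl" "is_t (l + 7) ul"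
  shows "G_eq (wi @ ui @ wj @ uj) (wk @ uk @ wl @ ul)"
proof -
  have d: "i \<noteq> j" "i \<noteq> k" "i \<noteq> l" "j \<noteq> k" "j \<noteq> l" "k \<noteq> l" using assms(5) by auto
  have c1: "third i j \<noteq> k" using assms(6) col_char[OF assms(1) assms(2) assms(3)] by auto
  have c2: "third i j \<noteq> l" using assms(7) col_char[OF assms(1) assms(2) assms(4)] by auto
  have c3: "third i k \<noteq> l" using assms(8) col_char[OF assms(1) assms(3) assms(4)] by auto
  have c4: "third j k \<noteq> l" using assms(9) col_char[OF assms(2) assms(3) assms(4)] by auto
  have fr: "third i j = third k l" by (rule frame[OF assms(1-5) c1 c2 c3 c4])
  have "cl (wi @ ui @ wj @ uj) = Sb i + Sb j"
    using is_t_cl[OF assms(10)] is_t_cl[OF assms(11)] is_t_cl[OF assms(12)] is_t_cl[OF assms(13)]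
    by (simp add: cl_append Sb_def add.assoc)
  also have "\<dots> = Sb (third i j)" using Line[OF assms(1) assms(2) d(1)] .
  also have "\<dots> = Sb (third k l)" using fr by simp
  also have "\<dots> = Sb k + Sb l" using Line[OF assms(3) assms(4) d(6)] by simp
  also have "\<dots> = cl (wk @ uk @ wl @ ul)"
    using is_t_cl[OF assms(14)] is_t_cl[OF assms(15)] is_t_cl[OF assms(16)] is_t_cl[OF assms(17)]
    by (simp add: cl_append Sb_def add.assoc)
  finally show ?thesis by (simp add: cl_eq_iff)
qed


end
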